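(* Let $\mathfrak g$ be of type $D_4$ and take $s=-1$, writing $\Pi=\Pi_{-1}$. For all $X\in\mathfrak g$, $Y\in V^-$ and $\bar n\in\bar N_0$, $$[\Pi(X),R(Y)]_{\bar n}=R\big([\mathrm{Ad}(\bar n^{-1})X,Y]_{V^-}\big)_{\bar n}-d\chi\big([\mathrm{Ad}(\bar n^{-1})X,Y]_{\mathfrak l}\big),$$ where $D_{\bar n}$ denotes the linear functional $f\mapsto (Df)(\bar n)$ on $C^\infty(\bar N_0)$, the scalar $d\chi(\cdot)$ on the right acts as the functional $f\mapsto d\chi(\cdot)f(\bar n)$, and $W_{V^-}$, $W_{\mathfrak l}$ denote the components of $W\in\mathfrak g$ in $V^-$ and $\mathfrak l$.
   Context: Let $\mathfrak g$ be a complex simple, simply laced Lie algebra with Cartan subalgebra $\mathfrak h$, roots $\Delta$, a positive system, highest root $\gamma$, and $H_\gamma\in\mathfrak h$ the coroot of $\gamma$. The eigenspace decomposition of $\mathrm{ad}(H_\gamma)$ is $\mathfrak g=\mathfrak g_{-\gamma}\oplus V^-\oplus\mathfrak l\oplus V^+\oplus\mathfrak g_\gamma$ (eigenvalues $-2,\dots,2$); $\mathfrak q=\mathfrak l\oplus\mathfrak n$ with $\mathfrak n=V^+\oplus\mathfrak g_\gamma$ is the Heisenberg parabolic, $\bar{\mathfrak n}=V^-\oplus\mathfrak g_{-\gamma}$. Let $X_\gamma$ span $\mathfrak g_\gamma$. Let $G_0$ be a connected real semisimple Lie group with Lie algebra $\mathfrak g_0$, $\mathfrak g_0\otimes\mathbb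 C=\mathfrak g$, and $Q_0=L_0N_0$ a parabolic subgroup whose Lie algebras complexify to $\mathfrak q,\mathfrak l,\mathfrak n$; $\bar N_0$ is the opposite nilpotent subgroup. Let $\chi$ be the real character of $L_0$ with $\mathrm{Ad}(l)X_\gamma=\chi(l)X_\gamma$ ($d\chi=\gamma$ on $\mathfrak h$), with $d\chi$ regarded as a linear form on $\mathfrak q$ vanishing on $\mathfrak n$. For $Y\in\mathfrak g$ write $Y=Y_{\bar{\mathfrak n}}+Y_{\mathfrak q}$ according to $\mathfrak g=\bar{\mathfrak n}\oplus\mathfrak q$. For $s\in\mathbb C$, $\mathcal L_{-s}$ is the trivial line bundle over $\bar N_0$ with sections $C^\infty(\bar N_0)$. $R(X)$ for $X\in\bar{\mathfrak n}_0$ is $(R(X)f)(\bar n)=\frac{d}{dt}f(\bar n\exp(tX))|_{t=0}$, extended $\mathbb C$-linearly and to $\mathcal U(\bar{\mathfrak n})$. $\Pi_s(Y)$ for $Y\in\mathfrak g$ is $(\Pi_s(Y)f)(\bar n)=-s\,d\chi((\mathrm{Ad}(\bar n^{-1})Y)_{\mathfrak q})f(\bar n)-(R((\mathrm{Ad}(\bar n^{-1})Y)_{\bar{\mathfrak n}})f)(\bar n)$. *)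

theory Defs
  imports "HOL-Analysis.Analysis"
begin

text \<open>Concrete model of the simple Lie algebra of type D4: so(8,C) realised as
  8x8 complex matrices A with A^T J + J A = 0, J the antidiagonal matrix
  (indices 0..7). Cartan subalgebra: diagonal matrices diag(a1,a2,a3,a4,-a4,-a3,-a2,-a1);
  standard positive system e_i +- e_j (i<j); highest root gamma = e1+e2.\<close>

type_synonym cmat = "complex^8^8"

definition cscale :: "complex \<Rightarrow> cmat \<Rightarrow> cmat" where
  "cscale c M = (\<chi> i j. c * M$i$j)"

definition bracket :: "cmat \<Rightarrow> cmat \<Rightarrow> cmat" where
  "bracket A B = A ** B - B ** A"

definition Jform :: cmat where
  "Jform = (\<chi> i j. if j = 7 - i then 1 else 0)"

definition so8 :: "cmat set" where
  "so8 = {A. transpose A ** Jform + Jform ** A = 0}"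

definition Hg :: cmat where
  "Hg = (\<chi> i j. if i = j then (if i = 0 \<or> i = 1 then 1 else if i = 6 \<or> i = 7 then -1 else 0) else 0)"

definition Xg :: cmat where
  "Xg = (\<chi> i j. if i = 0 \<and> j = 6 then 1 else if i = 1 \<and> j = 7 then -1 else 0)"

text \<open>Component of W in the eigenspace of ad(H_gamma) for eigenvalue k
  (H_gamma diagonal, so ad(H_gamma) acts entrywise by Hg_ii - Hg_jj).\<close>
definition comp :: "complex \<Rightarrow> cmat \<Rightarrow> cmat" where
  "comp k W = (\<chi> i j. if Hg$i$i - Hg$j$j = k then W$i$j else 0)"

definition Vminus :: "cmat set" where "Vminus = {W \<in> so8. comp (-1) W = W}"
definition lalg :: "cmat set" where "lalg = {W \<in> so8. comp 0 W = W}"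
definition nalg :: "cmat set" where "nalg = {W \<in> so8. comp 1 W + comp 2 W = W}"
definition nbar :: "cmat set" where "nbar = {W \<in> so8. comp (-2) W + comp (-1) W = W}"
definition qalg :: "cmat set" where "qalg = {W \<in> so8. comp 0 W + comp 1 W + comp 2 W = W}"

definition nbar_part :: "cmat \<Rightarrow> cmat" where "nbar_part W = comp (-2) W + comp (-1) W"
definition q_part :: "cmat \<Rightarrow> cmat" where "q_part W = comp 0 W + comp 1 W + comp 2 W"

definition dchi :: "cmat \<Rightarrow> complex" where
  "dchi W = (THE c. bracket (comp 0 W) Xg = cscale c Xg)"

fun matpow :: "cmat \<Rightarrow> nat \<Rightarrow> cmat" where
  "matpow X 0 = mat 1"
| "matpow X (Suc k) = X ** matpow X k"

definition mexp :: "cmat \<Rightarrow> cmat" where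
  "mexp X = (\<Sum>k. inverse (fact k) *\<^sub>R matpow X k)"

text \<open>A real form g0 of g in which q, l, n (and hence nbar) are defined over R.\<close>
definition complexifies :: "cmat set \<Rightarrow> cmat set \<Rightarrow> bool" where
  "complexifies g0 S \<longleftrightarrow> (\<forall>Y\<in>S. \<exists>A\<in>S \<inter> g0. \<exists>B\<in>S \<inter> g0. Y = A + cscale \<i> B)"

definition heis_real_form :: "cmat set \<Rightarrow> bool" where
  "heis_real_form g0 \<longleftrightarrow>
     g0 \<subseteq> so8 \<and> subspace g0 \<and> (\<forall>A\<in>g0. \<forall>B\<in>g0. bracket A B \<in> g0) \<and>
     (\<forall>A\<in>g0. cscale \<i> A \<in> g0 \<longrightarrow> A = 0) \<and> complexifies g0 so8 \<and>
     complexifies g0 qalg \<and> complexifies g0 lalg \<and> complexifies g0 nalg \<and>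
     complexifies g0 nbar"

definition Nbar0 :: "cmat set \<Rightarrow> cmat set" where
  "Nbar0 g0 = mexp ` (nbar \<inter> g0)"

definition re0 :: "cmat set \<Rightarrow> cmat \<Rightarrow> cmat" where
  "re0 g0 Y = (SOME A. A \<in> g0 \<and> (\<exists>B\<in>g0. Y = A + cscale \<i> B))"
definition im0 :: "cmat set \<Rightarrow> cmat \<Rightarrow> cmat" where
  "im0 g0 Y = (SOME B. B \<in> g0 \<and> (\<exists>A\<in>g0. Y = A + cscale \<i> B))"

definition Rreal :: "cmat \<Rightarrow> (cmat \<Rightarrow> complex) \<Rightarrow> cmat \<Rightarrow> complex" where
  "Rreal X f n = vector_derivative (\<lambda>t::real. f (n ** mexp (t *\<^sub>R X))) (at 0)"

definition Rop :: "cmat set \<Rightarrow> cmat \<Rightarrow> (cmat \<Rightarrow> complex) \<Rightarrow> cmat \<Rightarrow> complex" where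
  "Rop g0 Y f n = Rreal (re0 g0 Y) f n + \<i> * Rreal (im0 g0 Y) f n"

definition Adinv :: "cmat \<Rightarrow> cmat \<Rightarrow> cmat" where
  "Adinv n Y = matrix_inv n ** Y ** n"

definition PiOp :: "cmat set \<Rightarrow> complex \<Rightarrow> cmat \<Rightarrow> (cmat \<Rightarrow> complex) \<Rightarrow> cmat \<Rightarrow> complex" where
  "PiOp g0 s Y f n = - s * dchi (q_part (Adinv n Y)) * f n - Rop g0 (nbar_part (Adinv n Y)) f n"

text \<open>Smoothness: iterated directional derivatives within a real subspace S,
  each Frechet differentiable within S (i.e. C^infinity on S).\<close>
fun dd :: "cmat list \<Rightarrow> (cmat \<Rightarrow> complex) \<Rightarrow> cmat \<Rightarrow> complex" where
  "dd [] F = F"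
| "dd (v # vs) F = (\<lambda>x. vector_derivative (\<lambda>t::real. dd vs F (x + t *\<^sub>R v)) (at 0))"

definition smooth_on_sub :: "cmat set \<Rightarrow> (cmat \<Rightarrow> complex) \<Rightarrow> bool" where
  "smooth_on_sub S F \<longleftrightarrow> (\<forall>vs. set vs \<subseteq> S \<longrightarrow> (\<forall>x\<in>S. dd vs F differentiable (at x within S)))"

definition smooth_Nbar0 :: "cmat set \<Rightarrow> (cmat \<Rightarrow> complex) \<Rightarrow> bool" where
  "smooth_Nbar0 g0 f \<longleftrightarrow> smooth_on_sub (nbar \<inter> g0) (f \<circ> mexp)"

end

theory Submission
  imports Defs
begin


lemma exhaust_8:
  fixes x :: 8
  shows "x = 0 \<or> x = 1 \<or> x = 2 \<or> x = 3 \<or> x = 4 \<or> x = 5 \<or> x = 6 \<or> x = 7"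
proof (induct x)
  case (of_int z)
  then have "z = 0 \<or> z = 1 \<or> z = 2 \<or> z = 3 \<or> z = 4 \<or> z = 5 \<or> z = 6 \<or> z = 7" by fastforce
  then show ?case by auto
qed

lemma UNIV_8: "(UNIV::8 set) = {0,1,2,3,4,5,6,7}"
  using exhaust_8 by auto

definition hv :: "8 \<Rightarrow> int" where
  "hv i = (if i = 0 \<or> i = 1 then 1 else if i = 6 \<or> i = 7 then -1 else 0)"

lemma hv_range: "hv i = -1 \<or> hv i = 0 \<or> hv i = 1"
  by (simp add: hv_def)

lemma hv_7: "hv (7 - i) = - hv i"
  using exhaust_8[of i] by (auto simp: hv_def)

lemma Hg_diag: "Hg$i$i = of_int (hv i)"
  by (simp add: Hg_def hv_def)

lemma comp_nth: "comp k W $ i $ j = (if of_int (hv i - hv j) = k then W$i$j else 0)"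
  by (simp add: comp_def Hg_diag)

lemma comp_int: "comp (of_int k) W $ i $ j = (if hv i - hv j = k then W$i$j else 0)"
  unfolding comp_nth of_int_eq_iff ..

lemma comp_m2: "comp (-2) W $ i $ j = (if hv i - hv j = -2 then W$i$j else 0)"
  using comp_int[of "-2"] by simp
lemma comp_m1: "comp (-1) W $ i $ j = (if hv i - hv j = -1 then W$i$j else 0)"
  using comp_int[of "-1"] by simp
lemma comp_0: "comp 0 W $ i $ j = (if hv i - hv j = 0 then W$i$j else 0)"
  using comp_int[of "0"] by simp
lemma comp_1: "comp 1 W $ i $ j = (if hv i - hv j = 1 then W$i$j else 0)"
  using comp_int[of "1"] by simp
lemma comp_2: "comp 2 W $ i $ j = (if hv i - hv j = 2 then W$i$j else 0)"
  using comp_int[of "2"] by simp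
lemmas comp_nths = comp_m2 comp_m1 comp_0 comp_1 comp_2

lemma mm_rdistrib: "(A + B) ** C = A ** C + B ** (C::cmat)"
  by (simp add: matrix_matrix_mult_def vec_eq_iff sum.distrib distrib_right)
lemma mm_ldistrib: "C ** (A + B) = C ** A + C ** (B::cmat)"
  by (rule matrix_add_ldistrib)
lemma mm_diff_r: "(A - B) ** C = A ** C - B ** (C::cmat)"
  by (simp add: matrix_matrix_mult_def vec_eq_iff sum_subtractf left_diff_distrib)
lemma mm_diff_l: "C ** (A - B) = C ** A - C ** (B::cmat)"
  by (simp add: matrix_matrix_mult_def vec_eq_iff sum_subtractf right_diff_distrib)
lemma mm_neg_r: "(- A) ** C = - (A ** (C::cmat))"
  by (simp add: matrix_matrix_mult_def vec_eq_iff sum_negf)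
lemma mm_neg_l: "C ** (- A) = - (C ** (A::cmat))"
  by (simp add: matrix_matrix_mult_def vec_eq_iff sum_negf)
lemma mm_scaleR_r: "(r *\<^sub>R A) ** C = r *\<^sub>R (A ** (C::cmat))"
  by (simp add: scalar_matrix_assoc)
lemma mm_scaleR_l: "C ** (r *\<^sub>R A) = r *\<^sub>R (C ** (A::cmat))"
  by (simp add: matrix_scalar_ac scalar_matrix_assoc)
lemma mm_cscale_r: "(cscale c A) ** C = cscale c (A ** (C::cmat))"
  by (simp add: matrix_matrix_mult_def vec_eq_iff cscale_def sum_distrib_left mult.assoc)
lemma mm_cscale_l: "C ** (cscale c A) = cscale c (C ** (A::cmat))"
  by (simp add: matrix_matrix_mult_def vec_eq_iff cscale_def sum_distrib_left mult.left_commute)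
lemma mm_assoc: "A ** (B ** C) = (A ** B) ** (C::cmat)"
  by (rule matrix_mul_assoc)

lemmas mm_simps = mm_rdistrib mm_ldistrib mm_diff_r mm_diff_l mm_neg_r mm_neg_l
  mm_scaleR_r mm_scaleR_l mm_cscale_r mm_cscale_l mm_assoc

lemma cscale_nth[simp]: "cscale c A $ i $ j = c * A$i$j"
  by (simp add: cscale_def)
lemma scaleR_nth: "(r *\<^sub>R (A::cmat)) $ i $ j = of_real r * A$i$j"
proof -
  have "(r *\<^sub>R A)$i$j = r *\<^sub>R (A$i$j)" by simp
  also have "\<dots> = of_real r * A$i$j" by (rule scaleR_conv_of_real)
  finally show ?thesis .
qed

lemma cscale_add: "cscale c (A + B) = cscale c A + cscale c B"
  by (simp add: vec_eq_iff distrib_left)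
lemma cscale_diff: "cscale c (A - B) = cscale c A - cscale c B"
  by (simp add: vec_eq_iff right_diff_distrib)
lemma cscale_scaleR: "cscale c (r *\<^sub>R A) = r *\<^sub>R cscale c A"
  by (simp add: vec_eq_iff scaleR_nth mult.left_commute)
lemma bracket_cscale_l: "bracket (cscale c A) B = cscale c (bracket A B)"
  by (simp add: bracket_def mm_simps cscale_diff)
lemma bracket_cscale_r: "bracket A (cscale c B) = cscale c (bracket A B)"
  by (simp add: bracket_def mm_simps cscale_diff)

lemma sum_J_r: "(\<Sum>l\<in>UNIV. (W::cmat)$l$i * (if j = 7 - l then 1 else 0)) = W$(7-j)$i"
proof -
  have "\<And>l::8. (j = 7 - l) = (l = 7 - j)" by (auto simp: algebra_simps)
  then show ?thesis by (simp add: if_distrib cong: if_cong)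
qed
lemma sum_J_l: "(\<Sum>l\<in>UNIV. (if l = 7 - i then 1 else 0) * (W::cmat)$l$j) = W$(7-i)$j"
proof -
  have "\<And>l. (if l = 7 - i then 1 else 0) * (W::cmat)$l$j = (if l = 7 - i then W$l$j else 0)" by simp
  then show ?thesis by (simp only:) simp
qed

lemma so8_iff: "W \<in> so8 \<longleftrightarrow> (\<forall>i j. W$(7-j)$i + W$(7-i)$j = 0)"
  by (simp add: so8_def vec_eq_iff transpose_def matrix_matrix_mult_def Jform_def sum_J_r sum_J_l)

lemma so8_add: "A \<in> so8 \<Longrightarrow> B \<in> so8 \<Longrightarrow> A + B \<in> so8"
  by (simp add: so8_iff algebra_simps)
lemma so8_diff: "A \<in> so8 \<Longrightarrow> B \<in> so8 \<Longrightarrow> A - B \<in> so8"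
proof -
  assume a: "A \<in> so8" and b: "B \<in> so8"
  { fix i j
    have "(A - B)$(7-j)$i + (A - B)$(7-i)$j = (A$(7-j)$i + A$(7-i)$j) - (B$(7-j)$i + B$(7-i)$j)"
      by (simp add: algebra_simps)
    also have "\<dots> = 0" using a b by (simp only: so8_iff) simp
    finally have "(A - B)$(7-j)$i + (A - B)$(7-i)$j = 0" . }
  then show ?thesis by (simp only: so8_iff) blast
qed
lemma so8_neg: "A \<in> so8 \<Longrightarrow> - A \<in> so8"
  using so8_diff[of 0 A] so8_iff by simp
lemma so8_zero: "0 \<in> so8"
  by (simp add: so8_iff)
lemma so8_cscale: "A \<in> so8 \<Longrightarrow> cscale c A \<in> so8"
proof -
  assume "A \<in> so8"
  then have "\<forall>i j. A$(7-j)$i + A$(7-i)$j = 0" by (simp add: so8_iff)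
  then have "\<forall>i j. c * A$(7-j)$i + c * A$(7-i)$j = 0" by (metis distrib_left mult_zero_right)
  then show ?thesis by (simp add: so8_iff)
qed
lemma so8_scaleR: "A \<in> so8 \<Longrightarrow> r *\<^sub>R A \<in> so8"
proof -
  assume "A \<in> so8"
  then have "\<forall>i j. A$(7-j)$i + A$(7-i)$j = 0" by (simp add: so8_iff)
  then have "\<forall>i j. r *\<^sub>R A$(7-j)$i + r *\<^sub>R A$(7-i)$j = 0" by (metis scaleR_add_right scaleR_zero_right)
  then show ?thesis by (simp add: so8_iff)
qed
lemma so8_def2: "A \<in> so8 \<longleftrightarrow> transpose A ** Jform = - (Jform ** A)"
  by (simp add: so8_def eq_neg_iff_add_eq_0)
lemma so8_bracket: "A \<in> so8 \<Longrightarrow> B \<in> so8 \<Longrightarrow> bracket A B \<in> so8"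
proof -
  assume a: "A \<in> so8" and b: "B \<in> so8"
  have ta: "transpose A ** Jform = - (Jform ** A)" and tb: "transpose B ** Jform = - (Jform ** B)"
    using a b by (simp_all add: so8_def2)
  have tr: "transpose (bracket A B) = transpose B ** transpose A - transpose A ** transpose B"
    by (simp add: bracket_def transpose_def matrix_matrix_mult_def vec_eq_iff mult.commute)
  have "transpose (bracket A B) ** Jform = transpose B ** (transpose A ** Jform) - transpose A ** (transpose B ** Jform)"
    by (simp add: tr mm_simps)
  also have "\<dots> = transpose B ** (- (Jform ** A)) - transpose A ** (- (Jform ** B))"
    by (simp add: ta tb)
  also have "\<dots> = - ((transpose B ** Jform) ** A) + ((transpose A ** Jform) ** B)"
    by (simp add: mm_neg_l mm_assoc)
  also have "\<dots> = - (Jform ** bracket A B)"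
    by (simp add: ta tb mm_simps bracket_def)
  finally show ?thesis by (simp add: so8_def2)
qed

definition lowp :: "cmat \<Rightarrow> bool" where
  "lowp A \<longleftrightarrow> (\<forall>i j. hv j \<le> hv i \<longrightarrow> A$i$j = 0)"
definition low2 :: "cmat \<Rightarrow> bool" where
  "low2 A \<longleftrightarrow> (\<forall>i j. hv j < hv i + 2 \<longrightarrow> A$i$j = 0)"

lemma low2_lowp: "low2 A \<Longrightarrow> lowp A"
  by (simp add: low2_def lowp_def)

lemma lowp_mm: assumes "lowp A" "lowp B" shows "low2 (A ** B)"
  unfolding low2_def
proof (intro allI impI)
  fix i j assume h: "hv j < hv i + 2"
  have z: "\<And>l. A$i$l * B$l$j = 0"
  proof -
    fix l
    have "hv l \<le> hv i \<or> hv j \<le> hv l" using h hv_range[of i] hv_range[of j] hv_range[of l] by auto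
    then show "A$i$l * B$l$j = 0" using assms by (auto simp: lowp_def)
  qed
  show "(A ** B)$i$j = 0" by (simp add: matrix_matrix_mult_def z del: mult_eq_0_iff)
qed

lemma low2_mm_l: assumes "low2 A" "lowp B" shows "A ** B = 0"
proof -
  have z: "\<And>i j l. A$i$l * B$l$j = 0"
  proof -
    fix i j l
    have "hv l < hv i + 2 \<or> hv j \<le> hv l" using hv_range[of i] hv_range[of j] hv_range[of l] by auto
    then show "A$i$l * B$l$j = 0" using assms by (auto simp: lowp_def low2_def)
  qed
  show ?thesis by (simp add: matrix_matrix_mult_def vec_eq_iff z del: mult_eq_0_iff)
qed

lemma low2_mm_r: assumes "lowp A" "low2 B" shows "A ** B = 0"
proof -
  have z: "\<And>i j l. A$i$l * B$l$j = 0"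
  proof -
    fix i j l
    have "hv l \<le> hv i \<or> hv j < hv l + 2" using hv_range[of i] hv_range[of j] hv_range[of l] by auto
    then show "A$i$l * B$l$j = 0" using assms by (auto simp: lowp_def low2_def)
  qed
  show ?thesis by (simp add: matrix_matrix_mult_def vec_eq_iff z del: mult_eq_0_iff)
qed

lemma triple0: "lowp A \<Longrightarrow> lowp B \<Longrightarrow> lowp C \<Longrightarrow> A ** B ** C = 0"
  by (simp add: low2_mm_l lowp_mm)
lemma triple0': "lowp A \<Longrightarrow> lowp B \<Longrightarrow> lowp C \<Longrightarrow> A ** (B ** C) = 0"
  by (simp add: low2_mm_r lowp_mm)

lemma lowp_0: "lowp 0" by (simp add: lowp_def)
lemma lowp_add: "lowp A \<Longrightarrow> lowp B \<Longrightarrow> lowp (A + B)" by (simp add: lowp_def)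
lemma lowp_diff: "lowp A \<Longrightarrow> lowp B \<Longrightarrow> lowp (A - B)" by (simp add: lowp_def)
lemma lowp_neg: "lowp A \<Longrightarrow> lowp (- A)" by (simp add: lowp_def)
lemma lowp_scaleR: "lowp A \<Longrightarrow> lowp (r *\<^sub>R A)" by (simp add: lowp_def)
lemma lowp_cscale: "lowp A \<Longrightarrow> lowp (cscale c A)" by (simp add: lowp_def)
lemma low2_add: "low2 A \<Longrightarrow> low2 B \<Longrightarrow> low2 (A + B)" by (simp add: low2_def)
lemma low2_diff: "low2 A \<Longrightarrow> low2 B \<Longrightarrow> low2 (A - B)" by (simp add: low2_def)
lemma low2_bracket: "lowp A \<Longrightarrow> lowp B \<Longrightarrow> low2 (bracket A B)"
  by (simp add: bracket_def low2_diff lowp_mm)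
lemma lowp_bracket: "lowp A \<Longrightarrow> lowp B \<Longrightarrow> lowp (bracket A B)"
  by (simp add: low2_bracket low2_lowp)
lemma low2_bracket0: "low2 A \<Longrightarrow> lowp B \<Longrightarrow> bracket A B = 0"
  by (simp add: bracket_def low2_mm_l low2_mm_r)
lemma low2_bracket0': "lowp A \<Longrightarrow> low2 B \<Longrightarrow> bracket A B = 0"
  by (simp add: bracket_def low2_mm_l low2_mm_r)


lemma nbar_iff: "W \<in> nbar \<longleftrightarrow> W \<in> so8 \<and> lowp W"
proof -
  have "comp (-2) W + comp (-1) W = W \<longleftrightarrow> lowp W"
  proof
    assume h: "comp (-2) W + comp (-1) W = W"
    show "lowp W" unfolding lowp_def
    proof (intro allI impI)
      fix i j assume "hv j \<le> hv i"
      then have a: "hv i - hv j \<noteq> -2" "hv i - hv j \<noteq> -1" by auto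
      have "(comp (-2) W + comp (-1) W)$i$j = W$i$j" using h by simp
      then show "W$i$j = 0" using a by (simp add: comp_nths)
    qed
  next
    assume h: "lowp W"
    show "comp (-2) W + comp (-1) W = W"
    unfolding vec_eq_iff
    proof (intro allI)
      fix i j
      show "(comp (-2) W + comp (-1) W) $ i $ j = W $ i $ j"
      proof (cases "hv j \<le> hv i")
        case True then show ?thesis using h by (simp add: lowp_def comp_nths)
      next
        case False
        then have "hv i - hv j = -1 \<or> hv i - hv j = -2" using hv_range[of i] hv_range[of j] by auto
        then show ?thesis by (auto simp: comp_nths)
      qed
    qed
  qed
  then show ?thesis by (auto simp: nbar_def)
qed


lemma comp_so8: assumes "W \<in> so8" shows "comp k W \<in> so8"
proof -
  have h: "\<And>i j. W$(7-j)$i + W$(7-i)$j = 0" using assms by (simp add: so8_iff)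
  { fix i j
    have e: "hv (7 - j) - hv i = hv (7 - i) - hv j" by (simp add: hv_7)
    have "comp k W $ (7-j) $ i + comp k W $ (7-i) $ j = 0"
      unfolding comp_nth e using h[of i j] by (simp add: add.commute) }
  then show ?thesis by (simp add: so8_iff)
qed

lemma nbar_part_so8: "W \<in> so8 \<Longrightarrow> nbar_part W \<in> so8"
  by (simp add: nbar_part_def so8_add comp_so8)
lemma q_part_so8: "W \<in> so8 \<Longrightarrow> q_part W \<in> so8"
  by (simp add: q_part_def so8_add comp_so8)

lemma lowp_nbar_part: "lowp (nbar_part W)"
  by (simp add: lowp_def nbar_part_def comp_nths)

lemma nbar_part_nbar: "W \<in> so8 \<Longrightarrow> nbar_part W \<in> nbar"
  by (simp add: nbar_iff nbar_part_so8 lowp_nbar_part)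

lemma hv_diff_cases: "hv i - hv j \<in> {-2,-1,0,1,2}"
  using hv_range[of i] hv_range[of j] by auto

lemma nbar_q_decomp: "nbar_part W + q_part W = W"
proof -
  { fix i j
    have "(nbar_part W + q_part W)$i$j = W$i$j"
      using hv_diff_cases[of i j] by (auto simp: nbar_part_def q_part_def comp_nths) }
  then show ?thesis by (simp add: vec_eq_iff)
qed

lemma q_part_qalg: "W \<in> so8 \<Longrightarrow> q_part W \<in> qalg"
proof -
  assume "W \<in> so8"
  moreover
  { fix i j
    have "(comp 0 (q_part W) + comp 1 (q_part W) + comp 2 (q_part W))$i$j = q_part W $i$j"
      using hv_diff_cases[of i j] by (auto simp: q_part_def comp_nths) }
  ultimately show ?thesis by (simp add: qalg_def vec_eq_iff q_part_so8)
qed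

lemma nbar_qalg_0: "W \<in> nbar \<Longrightarrow> W \<in> qalg \<Longrightarrow> W = 0"
proof -
  assume a: "W \<in> nbar" and b: "W \<in> qalg"
  have ea: "comp (-2) W + comp (-1) W = W" using a by (simp add: nbar_def)
  have eb: "comp 0 W + comp 1 W + comp 2 W = W" using b by (simp add: qalg_def)
  { fix i j
    have "W$i$j = (comp (-2) W + comp (-1) W)$i$j" using ea by simp
    moreover have "W$i$j = (comp 0 W + comp 1 W + comp 2 W)$i$j" using eb by simp
    ultimately have "W$i$j = 0" by (auto simp: comp_nths split: if_splits) }
  then show ?thesis by (simp add: vec_eq_iff)
qed

lemma nbar_part_nbar_id: "W \<in> nbar \<Longrightarrow> nbar_part W = W"
  by (simp add: nbar_def nbar_part_def)

lemma q_part_comp0: "comp 0 (q_part W) = comp 0 W"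
  by (simp add: vec_eq_iff q_part_def comp_nths)
lemma comp0_comp0: "comp 0 (comp 0 W) = comp 0 W"
  by (simp add: vec_eq_iff comp_nths)

lemma dchi_q_part: "dchi (q_part W) = dchi W"
  by (simp add: dchi_def q_part_comp0)
lemma dchi_comp0: "dchi (comp 0 W) = dchi W"
  by (simp add: dchi_def comp0_comp0)

lemma mm_Xg_r: "(A ** Xg) $ i $ j = (if j = 6 then A$i$0 else if j = 7 then - A$i$1 else 0)"
proof -
  have "\<And>l. A$i$l * Xg$l$j = (if l = 0 \<and> j = 6 then A$i$0 else if l = 1 \<and> j = 7 then - A$i$1 else 0)"
    by (auto simp: Xg_def)
  then show ?thesis by (simp add: matrix_matrix_mult_def sum.If_cases)
qed

lemma mm_Xg_l: "(Xg ** A) $ i $ j = (if i = 0 then A$6$j else if i = 1 then - A$7$j else 0)"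
proof -
  have "\<And>l. Xg$i$l * A$l$j = (if i = 0 \<and> l = 6 then A$6$j else if i = 1 \<and> l = 7 then - A$7$j else 0)"
    by (auto simp: Xg_def)
  then show ?thesis by (simp add: matrix_matrix_mult_def sum.If_cases)
qed

lemma bracket_comp0_Xg: assumes "W \<in> so8"
  shows "bracket (comp 0 W) Xg = cscale (W$0$0 + W$1$1) Xg"
proof -
  have h: "\<And>i j. W$(7-j)$i + W$(7-i)$j = 0" using assms by (simp add: so8_iff)
  have r1: "W$6$6 = - W$1$1" using h[of 6 1] by (simp add: eq_neg_iff_add_eq_0 add.commute)
  have r2: "W$7$7 = - W$0$0" using h[of 7 0] by (simp add: eq_neg_iff_add_eq_0 add.commute)
  have r3: "W$6$7 = - W$0$1" using h[of 7 1] by (simp add: eq_neg_iff_add_eq_0 add.commute)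
  have r4: "W$7$6 = - W$1$0" using h[of 6 0] by (simp add: eq_neg_iff_add_eq_0 add.commute)
  { fix i j :: 8
    have "bracket (comp 0 W) Xg $ i $ j = cscale (W$0$0 + W$1$1) Xg $ i $ j"
      unfolding bracket_def vector_minus_component mm_Xg_r mm_Xg_l cscale_nth
      using exhaust_8[of i] exhaust_8[of j]
      apply (elim disjE)
      apply (simp_all only: comp_0 hv_def Xg_def r1 r2 r3 r4)
      apply simp_all
      done }
  then show ?thesis by (simp add: vec_eq_iff)
qed

lemma dchi_so8: assumes "W \<in> so8" shows "dchi W = W$0$0 + W$1$1"
  unfolding dchi_def bracket_comp0_Xg[OF assms]
proof (rule the_equality)
  fix c assume "cscale (W$0$0 + W$1$1) Xg = cscale c Xg"
  then have "cscale (W$0$0 + W$1$1) Xg $ 0 $ 6 = cscale c Xg $ 0 $ 6" by simp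
  then show "c = W$0$0 + W$1$1" by (simp add: Xg_def)
qed simp


definition E :: "cmat \<Rightarrow> cmat" where
  "E N = mat 1 + N + (1/2) *\<^sub>R (N ** N)"

lemma nnn: "lowp N \<Longrightarrow> N ** N ** N = 0"
  by (simp add: triple0)
lemma ynnn: "lowp N \<Longrightarrow> Y ** N ** N ** N = 0"
proof -
  assume "lowp N"
  have "Y ** N ** N ** N = Y ** (N ** N ** N)" by (simp add: mm_assoc)
  then show ?thesis using \<open>lowp N\<close> by (simp add: triple0)
qed

lemma matpow_3: "lowp N \<Longrightarrow> matpow N (k + 3) = 0"
proof -
  assume "lowp N"
  have "matpow N (k + 3) = (N ** N ** N) ** matpow N k"
    by (simp add: numeral_3_eq_3 mm_assoc)
  then show ?thesis using \<open>lowp N\<close> by (simp add: nnn)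
qed

lemma mexp_E: assumes "lowp N" shows "mexp N = E N"
proof -
  have z: "\<And>k. k \<notin> {0,1,2} \<Longrightarrow> inverse (fact k) *\<^sub>R matpow N k = 0"
  proof -
    fix k :: nat assume "k \<notin> {0,1,2}"
    then obtain m where "k = m + 3" by (metis add.commute insertCI le_Suc_ex not_le numeral_3_eq_3 less_Suc_eq_0_disj One_nat_def numeral_2_eq_2 less_Suc0 Suc_le_eq)
    then show "inverse (fact k) *\<^sub>R matpow N k = 0" using matpow_3[OF assms] by simp
  qed
  have "mexp N = (\<Sum>k\<in>{0,1,2}. inverse (fact k) *\<^sub>R matpow N k)"
    unfolding mexp_def by (rule suminf_finite) (use z in auto)
  also have "\<dots> = E N"
    by (simp add: E_def numeral_2_eq_2 fact_numeral)
  finally show ?thesis .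
qed

lemma lowp_E_arg: "lowp A \<Longrightarrow> lowp B \<Longrightarrow> lowp (A + B + (1/2) *\<^sub>R bracket A B)"
  by (simp add: lowp_add lowp_scaleR lowp_bracket)

lemma BCH: assumes a: "lowp A" and b: "lowp B"
  shows "E A ** E B = E (A + B + (1/2) *\<^sub>R bracket A B)"
proof -
  have t: "\<And>X Y Z. X \<in> {A,B} \<Longrightarrow> Y \<in> {A,B} \<Longrightarrow> Z \<in> {A,B} \<Longrightarrow> X ** Y ** Z = 0"
    using a b triple0 by auto
  have t': "\<And>W X Y Z. X \<in> {A,B} \<Longrightarrow> Y \<in> {A,B} \<Longrightarrow> Z \<in> {A,B} \<Longrightarrow> W ** X ** Y ** Z = 0"
  proof -
    fix W X Y Z assume "X \<in> {A,B}" "Y \<in> {A,B}" "Z \<in> {A,B}"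
    then have "W ** (X ** Y ** Z) = 0" using t by simp
    then show "W ** X ** Y ** Z = 0" by (simp add: mm_assoc)
  qed
  have z: "A ** A ** A = 0" "A ** A ** B = 0" "A ** B ** A = 0" "A ** B ** B = 0"
          "B ** A ** A = 0" "B ** A ** B = 0" "B ** B ** A = 0" "B ** B ** B = 0"
    using t by auto
  have z': "\<And>W. W ** A ** A ** A = 0" "\<And>W. W ** A ** A ** B = 0" "\<And>W. W ** A ** B ** A = 0" "\<And>W. W ** A ** B ** B = 0"
          "\<And>W. W ** B ** A ** A = 0" "\<And>W. W ** B ** A ** B = 0" "\<And>W. W ** B ** B ** A = 0" "\<And>W. W ** B ** B ** B = 0"
    using t' by auto
  show ?thesis
    unfolding E_def bracket_def
    apply (simp add: mm_simps z z' scaleR_add_right scaleR_diff_right)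
    done
qed

lemma E_0: "E 0 = mat 1" by (simp add: E_def)

lemma bracket_neg_self: "bracket (- N) N = 0"
  by (simp add: bracket_def mm_neg_l mm_neg_r)
lemma bracket_self_neg: "bracket N (- N) = 0"
  by (simp add: bracket_def mm_neg_l mm_neg_r)

lemma E_inv_l: "lowp N \<Longrightarrow> E (- N) ** E N = mat 1"
  using BCH[of "- N" N] by (simp add: lowp_neg bracket_neg_self E_0)
lemma E_inv_r: "lowp N \<Longrightarrow> E N ** E (- N) = mat 1"
  using BCH[of N "- N"] by (simp add: lowp_neg bracket_self_neg E_0)

lemma matrix_inv_unique:
  fixes A B :: cmat
  assumes "A ** B = mat 1" "B ** A = mat 1"
  shows "matrix_inv A = B"
proof -
  have ex: "\<exists>A'. A ** A' = mat 1 \<and> A' ** A = (mat 1::cmat)" using assms by blast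
  define C where "C = matrix_inv A"
  have c: "A ** C = mat 1 \<and> C ** A = mat 1"
    unfolding C_def matrix_inv_def by (rule someI_ex[OF ex])
  have "C = C ** (A ** B)" using assms by simp
  also have "\<dots> = (C ** A) ** B" by (simp add: mm_assoc)
  also have "\<dots> = B" using c by simp
  finally show ?thesis by (simp add: C_def)
qed

lemma matrix_inv_E: "lowp N \<Longrightarrow> matrix_inv (E N) = E (- N)"
  by (simp add: matrix_inv_unique E_inv_l E_inv_r)

definition Ad :: "cmat \<Rightarrow> cmat \<Rightarrow> cmat" where
  "Ad N X = E (- N) ** X ** E N"

lemma Ad_formula: assumes "lowp N"
  shows "Ad N X = X + bracket X N + (1/2) *\<^sub>R bracket (bracket X N) N
     + (1/6) *\<^sub>R bracket (bracket (bracket X N) N) N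
     + (1/24) *\<^sub>R bracket (bracket (bracket (bracket X N) N) N) N"
proof -
  have z: "N ** N ** N = 0" "\<And>Y. Y ** N ** N ** N = 0" using assms by (simp_all add: nnn ynnn)
  show ?thesis
    unfolding Ad_def E_def bracket_def
    apply (simp only: mm_simps z matrix_mul_lid matrix_mul_rid times0_left times0_right
       scaleR_add_right scaleR_diff_right scaleR_zero_right add_0_left add_0_right diff_zero
       diff_0 scaleR_minus_right minus_zero)
    apply (simp add: vec_eq_iff scaleR_nth)
    apply (simp add: scaleR_conv_of_real field_simps)
    done
qed


lemma nbar_add: "A \<in> nbar \<Longrightarrow> B \<in> nbar \<Longrightarrow> A + B \<in> nbar"
  by (simp add: nbar_iff so8_add lowp_add)
lemma nbar_scaleR: "A \<in> nbar \<Longrightarrow> r *\<^sub>R A \<in> nbar"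
  by (simp add: nbar_iff so8_scaleR lowp_scaleR)
lemma nbar_cscale: "A \<in> nbar \<Longrightarrow> cscale c A \<in> nbar"
  by (simp add: nbar_iff so8_cscale lowp_cscale)
lemma nbar_zero: "0 \<in> nbar"
  by (simp add: nbar_iff so8_zero lowp_0)
lemma nbar_bracket: "A \<in> nbar \<Longrightarrow> B \<in> nbar \<Longrightarrow> bracket A B \<in> nbar"
  by (simp add: nbar_iff so8_bracket lowp_bracket)
lemma subspace_nbar: "subspace nbar"
  unfolding subspace_def using nbar_add nbar_scaleR nbar_zero by auto

lemma so8_Ad: assumes "lowp N" "N \<in> so8" "X \<in> so8" shows "Ad N X \<in> so8"
  unfolding Ad_formula[OF assms(1)]
  by (intro so8_add so8_scaleR so8_bracket assms)

lemma Ad_add: "Ad N (A + B) = Ad N A + Ad N B"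
  by (simp add: Ad_def mm_simps)
lemma Ad_cscale: "Ad N (cscale c A) = cscale c (Ad N A)"
  by (simp add: Ad_def mm_simps)
lemma comp_add: "comp k (A + B) = comp k A + comp k B"
  by (simp add: vec_eq_iff comp_nth)
lemma comp_cscale: "comp k (cscale c A) = cscale c (comp k A)"
  by (simp add: vec_eq_iff comp_nth)
lemma comp_scaleR: "comp k (r *\<^sub>R A) = r *\<^sub>R (comp k A)"
  by (simp add: vec_eq_iff comp_nth)
lemma comp_diff: "comp k (A - B) = comp k A - comp k B"
  by (simp add: vec_eq_iff comp_nth)
lemma comp_neg: "comp k (- A) = - comp k A"
  by (simp add: vec_eq_iff comp_nth)
lemma nbar_part_add: "nbar_part (A + B) = nbar_part A + nbar_part B"
  by (simp add: nbar_part_def comp_add)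
lemma nbar_part_cscale: "nbar_part (cscale c A) = cscale c (nbar_part A)"
  by (simp add: nbar_part_def comp_cscale cscale_add)
lemma nbar_part_scaleR: "nbar_part (r *\<^sub>R A) = r *\<^sub>R (nbar_part A)"
  by (simp add: nbar_part_def comp_scaleR scaleR_add_right)
lemma nbar_part_diff: "nbar_part (A - B) = nbar_part A - nbar_part B"
  by (simp add: nbar_part_def comp_diff)
lemma bracket_add_l: "bracket (A + B) C = bracket A C + bracket B C"
  by (simp add: bracket_def mm_simps)
lemma bracket_add_r: "bracket C (A + B) = bracket C A + bracket C B"
  by (simp add: bracket_def mm_simps)
lemma bracket_scaleR_l: "bracket (r *\<^sub>R A) C = r *\<^sub>R bracket A C"
  by (simp add: bracket_def mm_simps scaleR_diff_right)
lemma bracket_scaleR_r: "bracket C (r *\<^sub>R A) = r *\<^sub>R bracket C A"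
  by (simp add: bracket_def mm_simps scaleR_diff_right)
lemma bracket_diff_l: "bracket (A - B) C = bracket A C - bracket B C"
  by (simp add: bracket_def mm_simps)
lemma bracket_diff_r: "bracket C (A - B) = bracket C A - bracket C B"
  by (simp add: bracket_def mm_simps)
lemma bracket_neg_l: "bracket (- A) C = - bracket A C"
  by (simp add: bracket_def mm_simps)
lemma bracket_neg_r: "bracket C (- A) = - bracket C A"
  by (simp add: bracket_def mm_simps)
lemma bracket_0_l: "bracket 0 C = 0" by (simp add: bracket_def)
lemma bracket_0_r: "bracket C 0 = 0" by (simp add: bracket_def)
lemma bracket_antisym: "bracket A B = - bracket B A" by (simp add: bracket_def)

lemma cscale_zero[simp]: "cscale c 0 = 0"
  by (simp add: vec_eq_iff)

lemma qalg_neg: assumes "W \<in> qalg" shows "- W \<in> qalg"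
proof -
  have e: "comp 0 W + comp 1 W + comp 2 W = W" and w: "W \<in> so8" using assms by (auto simp: qalg_def)
  have "comp 0 (-W) + comp 1 (-W) + comp 2 (-W) = -(comp 0 W + comp 1 W + comp 2 W)"
    by (simp add: comp_neg)
  also have "\<dots> = -W" using e by simp
  finally show ?thesis using w by (simp add: qalg_def so8_neg)
qed

context
  fixes g0 :: "cmat set"
  assumes H: "heis_real_form g0"
begin

lemma g0_so8: "g0 \<subseteq> so8" using H by (simp add: heis_real_form_def)
lemma g0_sub: "subspace g0" using H by (simp add: heis_real_form_def)
lemma g0_br: "A \<in> g0 \<Longrightarrow> B \<in> g0 \<Longrightarrow> bracket A B \<in> g0" using H by (simp add: heis_real_form_def)
lemma g0_i: "A \<in> g0 \<Longrightarrow> cscale \<i> A \<in> g0 \<Longrightarrow> A = 0" using H by (simp add: heis_real_form_def)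
lemma g0_add: "A \<in> g0 \<Longrightarrow> B \<in> g0 \<Longrightarrow> A + B \<in> g0" using g0_sub by (rule subspace_add)
lemma g0_diff: "A \<in> g0 \<Longrightarrow> B \<in> g0 \<Longrightarrow> A - B \<in> g0" using g0_sub by (rule subspace_diff)
lemma g0_neg: "A \<in> g0 \<Longrightarrow> - A \<in> g0" using g0_sub by (rule subspace_neg)
lemma g0_scaleR: "A \<in> g0 \<Longrightarrow> r *\<^sub>R A \<in> g0" using g0_sub by (rule subspace_scale)
lemma g0_zero: "0 \<in> g0" using g0_sub by (rule subspace_0)

lemma S_sub: "subspace (nbar \<inter> g0)"
  by (rule subspace_inter[OF subspace_nbar g0_sub])

lemma decomp_unique:
  assumes "A \<in> g0" "B \<in> g0" "A' \<in> g0" "B' \<in> g0" "A + cscale \<i> B = A' + cscale \<i> B'"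
  shows "A = A' \<and> B = B'"
proof -
  have "cscale \<i> (B' - B) = A - A'"
  proof -
    { fix k l
      have "A$k$l + \<i> * B$k$l = A'$k$l + \<i> * B'$k$l"
        using arg_cong[OF assms(5), of "\<lambda>M. M$k$l"] by simp
      then have "\<i> * (B'$k$l - B$k$l) = A$k$l - A'$k$l" by algebra }
    then show ?thesis by (simp add: vec_eq_iff)
  qed
  then have "cscale \<i> (B' - B) \<in> g0" using assms g0_diff by simp
  then have "B' - B = 0" using g0_i g0_diff assms by blast
  then show ?thesis using assms(5) by simp
qed

lemma re0_im0:
  assumes "A \<in> g0" "B \<in> g0" "Y = A + cscale \<i> B"
  shows "re0 g0 Y = A" "im0 g0 Y = B"
proof -
  have "re0 g0 Y \<in> g0 \<and> (\<exists>B'\<in>g0. Y = re0 g0 Y + cscale \<i> B')"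
    unfolding re0_def by (rule someI[of _ A]) (use assms in blast)
  then obtain B' where "re0 g0 Y \<in> g0" "B' \<in> g0" "Y = re0 g0 Y + cscale \<i> B'" by blast
  then show "re0 g0 Y = A" using decomp_unique[of "re0 g0 Y" B' A B] assms by simp
  have "im0 g0 Y \<in> g0 \<and> (\<exists>A'\<in>g0. Y = A' + cscale \<i> (im0 g0 Y))"
    unfolding im0_def by (rule someI[of _ B]) (use assms in blast)
  then obtain A' where "im0 g0 Y \<in> g0" "A' \<in> g0" "Y = A' + cscale \<i> (im0 g0 Y)" by blast
  then show "im0 g0 Y = B" using decomp_unique[of A' "im0 g0 Y" A B] assms by simp
qed

lemma Rop_decomp:
  assumes "A \<in> g0" "B \<in> g0"
  shows "Rop g0 (A + cscale \<i> B) f n = Rreal A f n + \<i> * Rreal B f n"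
  using re0_im0[OF assms refl] by (simp add: Rop_def)

lemma Rop_real:
  assumes "A \<in> g0"
  shows "Rop g0 A f n = Rreal A f n"
proof -
  have "Rop g0 (A + cscale \<i> 0) f n = Rreal A f n + \<i> * Rreal 0 f n"
    by (rule Rop_decomp[OF assms g0_zero])
  moreover have "Rreal 0 f n = 0" by (simp add: Rreal_def)
  ultimately show ?thesis by simp
qed

lemma decomp_in: "complexifies g0 T \<Longrightarrow> Y \<in> T \<Longrightarrow> \<exists>A\<in>T \<inter> g0. \<exists>B\<in>T \<inter> g0. Y = A + cscale \<i> B"
  by (simp add: complexifies_def)

lemma nbar_part_g0: assumes "A \<in> g0" shows "nbar_part A \<in> g0"
proof -
  have A8: "A \<in> so8" using assms g0_so8 by auto
  have cn: "complexifies g0 nbar" and cq: "complexifies g0 qalg" using H by (simp_all add: heis_real_form_def)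
  obtain B C where B: "B \<in> nbar \<inter> g0" and C: "C \<in> nbar \<inter> g0" and e1: "nbar_part A = B + cscale \<i> C"
    using decomp_in[OF cn nbar_part_nbar[OF A8]] by blast
  obtain B' C' where B': "B' \<in> qalg \<inter> g0" and C': "C' \<in> qalg \<inter> g0" and e2: "q_part A = B' + cscale \<i> C'"
    using decomp_in[OF cq q_part_qalg[OF A8]] by blast
  have "A + cscale \<i> 0 = (B + B') + cscale \<i> (C + C')"
  proof -
    have "A = (B + cscale \<i> C) + (B' + cscale \<i> C')" using nbar_q_decomp[of A] e1 e2 by simp
    then show ?thesis by (simp add: cscale_add)
  qed
  moreover have "B + B' \<in> g0" "C + C' \<in> g0" using B B' C C' g0_add by auto
  ultimately have "A = B + B' \<and> 0 = C + C'" using decomp_unique[of A 0 "B + B'" "C + C'"] assms g0_zero by blast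
  then have "C + C' = 0" by simp
  then have "C = - C'" by (simp add: eq_neg_iff_add_eq_0)
  then have "C \<in> qalg" using C' qalg_neg by auto
  then have "C = 0" using C nbar_qalg_0 by auto
  then show ?thesis using e1 B by simp
qed

lemma g0_Ad: assumes "N \<in> nbar \<inter> g0" "X \<in> g0" shows "Ad N X \<in> g0"
proof -
  have "lowp N" using assms by (simp add: nbar_iff)
  show ?thesis
    unfolding Ad_formula[OF \<open>lowp N\<close>] using assms
    by (intro g0_add g0_scaleR g0_br) auto
qed

end


lemma line_vd: "((\<lambda>t. x + t *\<^sub>R v) has_vector_derivative v) (at s)"
  unfolding has_vector_derivative_def
  by (auto intro!: derivative_eq_intros)

lemma dd_Nil[simp]: "dd [] G = G" by simp

lemma dd_single: "dd [v] G x = vector_derivative (\<lambda>t. G (x + t *\<^sub>R v)) (at 0)"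
  by simp

lemma dd_Cons: "dd (v # vs) G = dd [v] (dd vs G)"
  by (simp add: fun_eq_iff)

declare dd.simps(2)[simp del]

context
  fixes S :: "cmat set"
  assumes sub: "subspace S"
begin

lemma line_in: "y \<in> S \<Longrightarrow> v \<in> S \<Longrightarrow> y + t *\<^sub>R v \<in> S"
  using sub by (simp add: subspace_add subspace_scale)

lemma chain_gen:
  fixes G :: "cmat \<Rightarrow> complex"
  assumes "(G has_derivative D) (at x within S)" "\<And>t. p t \<in> S"
    "(p has_vector_derivative p') (at s)" "p s = x"
  shows "((\<lambda>t. G (p t)) has_vector_derivative D p') (at s)"
proof -
  have "range p \<subseteq> S" using assms(2) by auto
  then have "(G has_derivative D) (at (p s) within range p)"
    using assms(1,4) has_derivative_subset by blast
  from vector_derivative_diff_chain_within[OF assms(3) this] show ?thesis by (simp add: o_def)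
qed

lemma deriv_exists:
  fixes G :: "cmat \<Rightarrow> complex"
  assumes "smooth_on_sub S G" "x \<in> S"
  shows "\<exists>D. (G has_derivative D) (at x within S)"
proof -
  have "dd [] G differentiable (at x within S)"
    using assms unfolding smooth_on_sub_def by (metis empty_subsetI list.set(1))
  then show ?thesis by (simp add: differentiable_def)
qed

lemma dd_eq:
  fixes G :: "cmat \<Rightarrow> complex"
  assumes "(G has_derivative D) (at x within S)" "x \<in> S" "v \<in> S"
  shows "dd [v] G x = D v"
proof -
  have "((\<lambda>t. G (x + t *\<^sub>R v)) has_vector_derivative D v) (at 0)"
    by (rule chain_gen[OF assms(1)]) (auto intro: line_in assms line_vd)
  then show ?thesis by (simp add: vector_derivative_at dd_single)
qed

lemma chain_dd:
  fixes G :: "cmat \<Rightarrow> complex"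
  assumes "smooth_on_sub S G" "\<And>t. p t \<in> S"
    "(p has_vector_derivative p') (at s)" "p' \<in> S"
  shows "((\<lambda>t. G (p t)) has_vector_derivative dd [p'] G (p s)) (at s)"
proof -
  obtain D where D: "(G has_derivative D) (at (p s) within S)"
    using deriv_exists[OF assms(1) assms(2)] by blast
  have "dd [p'] G (p s) = D p'" using dd_eq[OF D assms(2) assms(4)] .
  then show ?thesis using chain_gen[OF D assms(2,3) refl] by simp
qed

lemma dd_lin:
  fixes G :: "cmat \<Rightarrow> complex"
  assumes "smooth_on_sub S G" "x \<in> S"
  shows "\<exists>D. linear D \<and> (\<forall>v\<in>S. dd [v] G x = D v)"
proof -
  obtain D where D: "(G has_derivative D) (at x within S)"
    using deriv_exists[OF assms] by blast
  then show ?thesis using dd_eq[OF D assms(2)] has_derivative_linear by blast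
qed

lemma dd_add:
  fixes G :: "cmat \<Rightarrow> complex"
  assumes "smooth_on_sub S G" "x \<in> S" "a \<in> S" "b \<in> S"
  shows "dd [a + b] G x = dd [a] G x + dd [b] G x"
proof -
  obtain D where "linear D" "\<forall>v\<in>S. dd [v] G x = D v" using dd_lin[OF assms(1,2)] by blast
  then show ?thesis using assms sub by (simp add: subspace_add linear_add)
qed

lemma dd_scaleR:
  fixes G :: "cmat \<Rightarrow> complex"
  assumes "smooth_on_sub S G" "x \<in> S" "a \<in> S"
  shows "dd [r *\<^sub>R a] G x = of_real r * dd [a] G x"
proof -
  obtain D where "linear D" "\<forall>v\<in>S. dd [v] G x = D v" using dd_lin[OF assms(1,2)] by blast
  moreover have "r *\<^sub>R D a = of_real r * D a" by (rule scaleR_conv_of_real)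
  ultimately show ?thesis using assms sub by (simp add: subspace_scale linear_scale)
qed

lemma dd_neg:
  fixes G :: "cmat \<Rightarrow> complex"
  assumes "smooth_on_sub S G" "x \<in> S" "a \<in> S"
  shows "dd [- a] G x = - dd [a] G x"
  using dd_scaleR[OF assms, of "-1"] by simp

lemma dd_diff:
  fixes G :: "cmat \<Rightarrow> complex"
  assumes "smooth_on_sub S G" "x \<in> S" "a \<in> S" "b \<in> S"
  shows "dd [a - b] G x = dd [a] G x - dd [b] G x"
  using dd_add[OF assms(1,2,3), of "- b"] dd_neg[OF assms(1,2,4)] sub assms(4)
  by (simp add: subspace_neg)

lemma dd_zero:
  fixes G :: "cmat \<Rightarrow> complex"
  assumes "smooth_on_sub S G" "x \<in> S"
  shows "dd [0] G x = 0"
  using dd_scaleR[OF assms subspace_0[OF sub], of 0] by simp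

lemma dd_append: "dd vs (dd [v] G) = dd (vs @ [v]) G"
proof (induction vs)
  case Nil then show ?case by simp
next
  case (Cons w vs) then show ?case by (simp add: dd_Cons[of w vs] dd_Cons[of w "vs @ [v]"])
qed

lemma smooth_dd:
  fixes G :: "cmat \<Rightarrow> complex"
  assumes "smooth_on_sub S G" "v \<in> S"
  shows "smooth_on_sub S (dd [v] G)"
  unfolding smooth_on_sub_def dd_append
  using assms unfolding smooth_on_sub_def by simp

lemma dd_cong:
  fixes G1 G2 :: "cmat \<Rightarrow> complex"
  assumes "\<And>y. y \<in> S \<Longrightarrow> G1 y = G2 y" "x \<in> S" "v \<in> S"
  shows "dd [v] G1 x = dd [v] G2 x"
proof -
  have "(\<lambda>t. G1 (x + t *\<^sub>R v)) = (\<lambda>t. G2 (x + t *\<^sub>R v))"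
    using assms line_in by auto
  then show ?thesis by (simp add: dd_single)
qed

end


context
  fixes S :: "cmat set"
  assumes sub: "subspace S"
begin

lemma clairaut_half:
  fixes G :: "cmat \<Rightarrow> complex"
  assumes sm: "smooth_on_sub S G" and x: "x \<in> S" and a: "a \<in> S" and b: "b \<in> S"
    and La: "(dd [a] G has_derivative La) (at x within S)" and e: "\<epsilon> > 0"
  shows "\<exists>\<delta>>0. \<forall>t. 0 < t \<and> t < \<delta> \<longrightarrow>
     norm (G (x + t *\<^sub>R a + t *\<^sub>R b) - G (x + t *\<^sub>R a) - G (x + t *\<^sub>R b) + G x
           - of_real (t^2) * La b) \<le> \<epsilon> * t^2"
proof -
  define K where "K = 2 * (norm a + norm b) + 1"
  have pos: "\<And>u v::real. u \<ge> 0 \<Longrightarrow> v \<ge> 0 \<Longrightarrow> 0 < 2*(u+v)+1 \<and> 0 < u + v + 1" by (simp add: distrib_left)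
  have K: "K > 0" unfolding K_def using pos[OF norm_ge_zero norm_ge_zero] by blast
  define e' where "e' = \<epsilon> / K"
  have e': "e' > 0" unfolding e'_def using e K by simp
  have blLa: "bounded_linear La" using La has_derivative_bounded_linear by blast
  then have lin: "linear La" by (rule bounded_linear.linear)
  from La obtain d where d: "d > 0" and dh: "\<forall>y\<in>S. norm (y - x) < d \<longrightarrow>
      norm (dd [a] G y - dd [a] G x - La (y - x)) \<le> e' * norm (y - x)"
    using e' unfolding has_derivative_within_alt by blast
  define \<delta> where "\<delta> = d / (norm a + norm b + 1)"
  have npos: "norm a + norm b + 1 > 0" using pos[OF norm_ge_zero norm_ge_zero] by blast
  have \<delta>: "\<delta> > 0" unfolding \<delta>_def using d npos by simp
  show ?thesis
  proof (intro exI[of _ \<delta>] conjI allI impI)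
    show "\<delta> > 0" by (rule \<delta>)
    fix t :: real assume t: "0 < t \<and> t < \<delta>"
    have tb: "t * (norm a + norm b) < d"
    proof -
      have "t * (norm a + norm b) \<le> t * (norm a + norm b + 1)" using t by simp
      also have "\<dots> < \<delta> * (norm a + norm b + 1)" using t npos by simp
      also have "\<dots> = d" unfolding \<delta>_def using npos by simp
      finally show ?thesis .
    qed
    define g where "g s = dd [a] G (x + s *\<^sub>R a + t *\<^sub>R b) - dd [a] G (x + s *\<^sub>R a) - of_real t * La b" for s
    define h where "h s = G (x + s *\<^sub>R a + t *\<^sub>R b) - G (x + s *\<^sub>R a) - of_real (s * t) * La b" for s
    have hd: "(h has_vector_derivative g s) (at s)" for s
    proof -
      have p1: "((\<lambda>s. G ((x + t *\<^sub>R b) + s *\<^sub>R a)) has_vector_derivative dd [a] G ((x + t *\<^sub>R b) + s *\<^sub>R a)) (at s)"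
        by (rule chain_dd[OF sub sm, of "\<lambda>s. (x + t *\<^sub>R b) + s *\<^sub>R a"])
           (auto intro: line_in[OF sub] x a b line_vd)
      have p2: "((\<lambda>s. G (x + s *\<^sub>R a)) has_vector_derivative dd [a] G (x + s *\<^sub>R a)) (at s)"
        by (rule chain_dd[OF sub sm, of "\<lambda>s. x + s *\<^sub>R a"])
           (auto intro: line_in[OF sub] x a b line_vd)
      have p3: "((\<lambda>s. of_real (s * t) * La b) has_vector_derivative of_real t * La b) (at s)"
        by (auto intro!: derivative_eq_intros)
      have e1: "\<And>s. x + s *\<^sub>R a + t *\<^sub>R b = (x + t *\<^sub>R b) + s *\<^sub>R a" by (simp add: algebra_simps)
      show ?thesis unfolding h_def g_def e1
        by (intro has_vector_derivative_diff p1 p2 p3)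
    qed
    have gb: "norm (g s) \<le> \<epsilon> * t" if s: "0 < s" "s < t" for s
    proof -
      define y1 where "y1 = x + s *\<^sub>R a + t *\<^sub>R b"
      define y2 where "y2 = x + s *\<^sub>R a"
      have y1S: "y1 \<in> S" unfolding y1_def by (intro line_in[OF sub] x a b)
      have y2S: "y2 \<in> S" unfolding y2_def by (intro line_in[OF sub] x a b)
      have n1: "norm (y1 - x) \<le> t * (norm a + norm b)"
      proof -
        have "y1 - x = s *\<^sub>R a + t *\<^sub>R b" by (simp add: y1_def)
        then have "norm (y1 - x) \<le> norm (s *\<^sub>R a) + norm (t *\<^sub>R b)" by (simp only: norm_triangle_ineq)
        also have "\<dots> = s * norm a + t * norm b" using s t by simp
        also have "\<dots> \<le> t * norm a + t * norm b" using s by (simp add: mult_right_mono)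
        finally show ?thesis by (simp add: algebra_simps)
      qed
      have n2: "norm (y2 - x) \<le> t * (norm a + norm b)"
      proof -
        have "norm (y2 - x) = s * norm a" unfolding y2_def using s by simp
        also have "\<dots> \<le> t * norm a" using s by (simp add: mult_right_mono)
        also have "\<dots> \<le> t * (norm a + norm b)" using t by (simp add: mult_left_mono)
        finally show ?thesis .
      qed
      have A1: "norm (dd [a] G y1 - dd [a] G x - La (y1 - x)) \<le> e' * norm (y1 - x)"
        using dh y1S n1 tb by auto
      have A2: "norm (dd [a] G y2 - dd [a] G x - La (y2 - x)) \<le> e' * norm (y2 - x)"
        using dh y2S n2 tb by auto
      have Ld: "La (y1 - x) - La (y2 - x) = of_real t * La b"
      proof -
        have "La (y1 - x) - La (y2 - x) = La (t *\<^sub>R b)"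
          unfolding y1_def y2_def linear_diff[OF lin, symmetric] by (simp add: algebra_simps)
        also have "\<dots> = t *\<^sub>R La b" by (rule linear_scale[OF lin])
        also have "\<dots> = of_real t * La b" by (rule scaleR_conv_of_real)
        finally show ?thesis .
      qed
      have gs: "g s = dd [a] G y1 - dd [a] G y2 - of_real t * La b"
        unfolding g_def y1_def y2_def ..
      have "g s = (dd [a] G y1 - dd [a] G x - La (y1 - x)) - (dd [a] G y2 - dd [a] G x - La (y2 - x))"
        unfolding gs Ld[symmetric] by (simp add: algebra_simps)
      then have "norm (g s) \<le> norm (dd [a] G y1 - dd [a] G x - La (y1 - x)) + norm (dd [a] G y2 - dd [a] G x - La (y2 - x))"
        by (simp only: norm_triangle_ineq4)
      then have "norm (g s) \<le> e' * norm (y1 - x) + e' * norm (y2 - x)"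
        using A1 A2 by linarith
      also have "\<dots> \<le> e' * (t * (norm a + norm b)) + e' * (t * (norm a + norm b))"
      proof -
        have "e' * norm (y1 - x) \<le> e' * (t * (norm a + norm b))" using n1 e' by (intro mult_left_mono) auto
        moreover have "e' * norm (y2 - x) \<le> e' * (t * (norm a + norm b))" using n2 e' by (intro mult_left_mono) auto
        ultimately show ?thesis by linarith
      qed
      also have "\<dots> \<le> e' * K * t" unfolding K_def using e' t by (simp add: algebra_simps)
      also have "\<dots> = \<epsilon> * t" unfolding e'_def using K by simp
      finally show ?thesis .
    qed
    have cont: "continuous_on {0..t} h"
      using hd has_vector_derivative_continuous continuous_at_imp_continuous_on by blast
    obtain s where s: "s \<in> {0<..<t}" and mv: "norm (h t - h 0) \<le> norm ((t - 0) *\<^sub>R g s)"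
      using mvt_general[of 0 t h "\<lambda>s u. u *\<^sub>R g s"] t cont hd
      unfolding has_vector_derivative_def by auto
    have "norm (h t - h 0) \<le> t * (\<epsilon> * t)"
    proof -
      have "norm ((t - 0) *\<^sub>R g s) = t * norm (g s)" using t by simp
      also have "\<dots> \<le> t * (\<epsilon> * t)" using gb[of s] s t by (simp add: mult_left_mono)
      finally show ?thesis using mv by simp
    qed
    moreover have "h t - h 0 = G (x + t *\<^sub>R a + t *\<^sub>R b) - G (x + t *\<^sub>R a) - G (x + t *\<^sub>R b) + G x
           - of_real (t^2) * La b"
      unfolding h_def by (simp add: power2_eq_square algebra_simps)
    ultimately show "norm (G (x + t *\<^sub>R a + t *\<^sub>R b) - G (x + t *\<^sub>R a) - G (x + t *\<^sub>R b) + G x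
           - of_real (t^2) * La b) \<le> \<epsilon> * t^2" by (simp add: power2_eq_square algebra_simps)
  qed
qed


lemma clairaut:
  fixes G :: "cmat \<Rightarrow> complex"
  assumes sm: "smooth_on_sub S G" and x: "x \<in> S" and a: "a \<in> S" and b: "b \<in> S"
  shows "dd [a] (dd [b] G) x = dd [b] (dd [a] G) x"
proof -
  obtain La where La: "(dd [a] G has_derivative La) (at x within S)"
    using deriv_exists[OF sub smooth_dd[OF sub sm a] x] by blast
  obtain Lb where Lb: "(dd [b] G has_derivative Lb) (at x within S)"
    using deriv_exists[OF sub smooth_dd[OF sub sm b] x] by blast
  have e1: "dd [b] (dd [a] G) x = La b" by (rule dd_eq[OF sub La x b])
  have e2: "dd [a] (dd [b] G) x = Lb a" by (rule dd_eq[OF sub Lb x a])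
  have "La b = Lb a"
  proof (rule ccontr)
    assume ne: "La b \<noteq> Lb a"
    define \<epsilon> where "\<epsilon> = norm (La b - Lb a) / 4"
    have ep: "\<epsilon> > 0" using ne unfolding \<epsilon>_def by simp
    obtain d1 where d1: "d1 > 0" and h1: "\<forall>t. 0 < t \<and> t < d1 \<longrightarrow>
     norm (G (x + t *\<^sub>R a + t *\<^sub>R b) - G (x + t *\<^sub>R a) - G (x + t *\<^sub>R b) + G x
           - of_real (t^2) * La b) \<le> \<epsilon> * t^2"
      using clairaut_half[OF sm x a b La ep] by blast
    obtain d2 where d2: "d2 > 0" and h2: "\<forall>t. 0 < t \<and> t < d2 \<longrightarrow>
     norm (G (x + t *\<^sub>R b + t *\<^sub>R a) - G (x + t *\<^sub>R b) - G (x + t *\<^sub>R a) + G x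
           - of_real (t^2) * Lb a) \<le> \<epsilon> * t^2"
      using clairaut_half[OF sm x b a Lb ep] by blast
    define t where "t = min d1 d2 / 2"
    have t: "0 < t" "t < d1" "t < d2" unfolding t_def using d1 d2 by auto
    define D where "D = G (x + t *\<^sub>R a + t *\<^sub>R b) - G (x + t *\<^sub>R a) - G (x + t *\<^sub>R b) + G x"
    have D2: "G (x + t *\<^sub>R b + t *\<^sub>R a) - G (x + t *\<^sub>R b) - G (x + t *\<^sub>R a) + G x = D"
      unfolding D_def by (simp add: algebra_simps)
    have n1: "norm (D - of_real (t^2) * La b) \<le> \<epsilon> * t^2" using h1 t unfolding D_def by blast
    have n2: "norm (D - of_real (t^2) * Lb a) \<le> \<epsilon> * t^2" using h2 t D2 by auto
    have "of_real (t^2) * (La b - Lb a) = (D - of_real (t^2) * Lb a) - (D - of_real (t^2) * La b)"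
      by (simp add: algebra_simps)
    then have "norm (of_real (t^2) * (La b - Lb a)) \<le> norm (D - of_real (t^2) * Lb a) + norm (D - of_real (t^2) * La b)"
      by (simp only: norm_triangle_ineq4)
    moreover have "norm (of_real (t^2) * (La b - Lb a)) = t^2 * norm (La b - Lb a)"
      by (simp add: norm_mult norm_power)
    ultimately have "t^2 * norm (La b - Lb a) \<le> 2 * \<epsilon> * t^2" using n1 n2 by linarith
    then have "t^2 * norm (La b - Lb a) \<le> t^2 * (norm (La b - Lb a) / 2)" unfolding \<epsilon>_def by simp
    then have "norm (La b - Lb a) \<le> norm (La b - Lb a) / 2" using t by simp
    then show False using ne by simp
  qed
  then show ?thesis using e1 e2 by simp
qed

end


lemma coords_exist:
  fixes S :: "cmat set"
  assumes sub: "subspace S"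
  shows "\<exists>B c. finite B \<and> B \<subseteq> S \<and> (\<forall>b\<in>B. bounded_linear (c b :: cmat \<Rightarrow> real)) \<and>
     (\<forall>v\<in>S. v = (\<Sum>b\<in>B. c b v *\<^sub>R b))"
proof -
  obtain B where BS: "B \<subseteq> S" and ind: "independent B" and sp: "S \<subseteq> span B"
    using basis_exists[of S] by metis
  have fin: "finite B" using ind by (rule independent_imp_finite)
  define c where "c b = (SOME g. linear g \<and> (\<forall>x\<in>B. g x = (if x = b then 1 else (0::real))))" for b
  have c: "linear (c b) \<and> (\<forall>x\<in>B. c b x = (if x = b then 1 else 0))" for b
  proof -
    have ex: "\<exists>g. linear g \<and> (\<forall>x\<in>B. g x = (\<lambda>x. if x = b then 1 else (0::real)) x)"
      by (rule linear_independent_extend[OF ind])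
    have ex': "\<exists>g. linear g \<and> (\<forall>x\<in>B. g x = (if x = b then 1 else (0::real)))" using ex by simp
    show ?thesis unfolding c_def by (rule someI_ex[OF ex'])
  qed
  have bl: "bounded_linear (c b)" for b using c[of b] linear_conv_bounded_linear by blast
  have rep: "v = (\<Sum>b\<in>B. c b v *\<^sub>R b)" if v: "v \<in> S" for v
  proof -
    have "v \<in> span B" using v sp by auto
    then have "v \<in> range (\<lambda>u. \<Sum>x\<in>B. u x *\<^sub>R x)" by (simp only: span_finite[OF fin])
    then obtain u where u: "v = (\<Sum>x\<in>B. u x *\<^sub>R x)" by blast
    have cb: "c b v = u b" if b: "b \<in> B" for b
    proof -
      have lc: "linear (c b)" using c by blast
      have "c b v = (\<Sum>x\<in>B. u x * c b x)"
        unfolding u by (simp add: linear_sum[OF lc] linear_scale[OF lc])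
      also have "\<dots> = (\<Sum>x\<in>B. if x = b then u x else 0)"
        using c[of b] by (intro sum.cong) auto
      also have "\<dots> = u b" using b fin by simp
      finally show ?thesis .
    qed
    have "(\<Sum>b\<in>B. c b v *\<^sub>R b) = (\<Sum>b\<in>B. u b *\<^sub>R b)"
      using cb by (intro sum.cong) auto
    then show ?thesis using u by simp
  qed
  show ?thesis
    apply (rule exI[of _ B], rule exI[of _ c])
    using fin BS bl rep by blast
qed

context
  fixes S :: "cmat set"
  assumes sub: "subspace S"
begin

lemma dd_sum:
  fixes G :: "cmat \<Rightarrow> complex"
  assumes sm: "smooth_on_sub S G" and x: "x \<in> S" and fin: "finite B" and BS: "B \<subseteq> S"
  shows "dd [\<Sum>b\<in>B. r b *\<^sub>R b] G x = (\<Sum>b\<in>B. of_real (r b) * dd [b] G x)"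
proof -
  obtain D where lin: "linear D" and D: "\<forall>v\<in>S. dd [v] G x = D v" using dd_lin[OF sub sm x] by blast
  have inS: "(\<Sum>b\<in>B. r b *\<^sub>R b) \<in> S"
    using BS sub by (intro subspace_sum subspace_scale) auto
  have "dd [\<Sum>b\<in>B. r b *\<^sub>R b] G x = D (\<Sum>b\<in>B. r b *\<^sub>R b)" using D inS by simp
  also have "\<dots> = (\<Sum>b\<in>B. r b *\<^sub>R D b)" by (simp add: linear_sum[OF lin] linear_scale[OF lin])
  also have "\<dots> = (\<Sum>b\<in>B. of_real (r b) * dd [b] G x)"
    using D BS by (intro sum.cong) (auto simp: scaleR_conv_of_real)
  finally show ?thesis .
qed

lemma dir_vary:
  fixes G :: "cmat \<Rightarrow> complex"
  assumes sm: "smooth_on_sub S G"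
    and p: "\<And>t. p t \<in> S" and pd: "(p has_vector_derivative p') (at 0)" and p': "p' \<in> S"
    and w: "\<And>t. w t \<in> S" and wd: "(w has_vector_derivative w') (at 0)" and w': "w' \<in> S"
  shows "((\<lambda>t. dd [w t] G (p t)) has_vector_derivative
           (dd [p'] (dd [w 0] G) (p 0) + dd [w'] G (p 0))) (at 0)"
proof -
  obtain B c where fin: "finite B" and BS: "B \<subseteq> S" and bl: "\<forall>b\<in>B. bounded_linear (c b :: cmat \<Rightarrow> real)"
    and rep: "\<forall>v\<in>S. v = (\<Sum>b\<in>B. c b v *\<^sub>R b)"
    using coords_exist[OF sub] by blast
  have ddrep: "dd [v] G y = (\<Sum>b\<in>B. of_real (c b v) * dd [b] G y)" if "v \<in> S" "y \<in> S" for v y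
  proof -
    have vr: "v = (\<Sum>b\<in>B. c b v *\<^sub>R b)" using rep that(1) by blast
    have "dd [v] G y = dd [\<Sum>b\<in>B. c b v *\<^sub>R b] G y" using arg_cong[OF vr, of "\<lambda>u. dd [u] G y"] .
    also have "\<dots> = (\<Sum>b\<in>B. of_real (c b v) * dd [b] G y)" by (rule dd_sum[OF sm that(2) fin BS])
    finally show ?thesis .
  qed
  have smb: "smooth_on_sub S (dd [b] G)" if "b \<in> B" for b using smooth_dd[OF sub sm] BS that by auto
  have d1: "((\<lambda>t. of_real (c b (w t)) :: complex) has_vector_derivative of_real (c b w')) (at 0)" if "b \<in> B" for b
  proof -
    have "((\<lambda>t. c b (w t)) has_vector_derivative c b w') (at 0)"
      using bounded_linear.has_vector_derivative[OF bl[rule_format, OF that] wd] .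
    then show ?thesis
      using bounded_linear.has_vector_derivative[OF bounded_linear_of_real] by blast
  qed
  have d2: "((\<lambda>t. dd [b] G (p t)) has_vector_derivative dd [p'] (dd [b] G) (p 0)) (at 0)" if "b \<in> B" for b
    by (rule chain_dd[OF sub smb[OF that] p pd p'])
  have dsum: "((\<lambda>t. \<Sum>b\<in>B. of_real (c b (w t)) * dd [b] G (p t)) has_vector_derivative
      (\<Sum>b\<in>B. of_real (c b (w 0)) * dd [p'] (dd [b] G) (p 0) + of_real (c b w') * dd [b] G (p 0))) (at 0)"
    by (intro has_vector_derivative_sum has_vector_derivative_mult d1 d2)
  have eqf: "(\<lambda>t. dd [w t] G (p t)) = (\<lambda>t. \<Sum>b\<in>B. of_real (c b (w t)) * dd [b] G (p t))"
  proof
    fix t show "dd [w t] G (p t) = (\<Sum>b\<in>B. of_real (c b (w t)) * dd [b] G (p t))"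
      by (rule ddrep[OF w p])
  qed
  have s2: "(\<Sum>b\<in>B. of_real (c b w') * dd [b] G (p 0)) = dd [w'] G (p 0)"
    by (rule ddrep[OF w' p, symmetric])
  have s1: "(\<Sum>b\<in>B. of_real (c b (w 0)) * dd [p'] (dd [b] G) (p 0)) = dd [p'] (dd [w 0] G) (p 0)"
  proof -
    define H where "H y = (\<Sum>b\<in>B. of_real (c b (w 0)) * dd [b] G y)" for y
    have "dd [p'] (dd [w 0] G) (p 0) = dd [p'] H (p 0)"
      by (rule dd_cong[OF sub _ p p']) (unfold H_def, rule ddrep[OF w])
    moreover have "((\<lambda>s. H (p 0 + s *\<^sub>R p')) has_vector_derivative
        (\<Sum>b\<in>B. of_real (c b (w 0)) * dd [p'] (dd [b] G) (p 0 + 0 *\<^sub>R p'))) (at 0)"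
      unfolding H_def
      by (intro has_vector_derivative_sum has_vector_derivative_mult_right
           chain_dd[OF sub smb _ line_vd p'] line_in[OF sub p p'])
    ultimately show ?thesis by (simp add: dd_single vector_derivative_at)
  qed
  show ?thesis unfolding eqf using dsum by (simp add: sum.distrib s1 s2)
qed

end


lemma bb_mm: "bounded_bilinear (\<lambda>A B::cmat. A ** B)"
  unfolding bilinear_conv_bounded_bilinear[symmetric] bilinear_def
  by (auto intro!: linearI simp: mm_simps)

lemma bb_br: "bounded_bilinear bracket"
  unfolding bilinear_conv_bounded_bilinear[symmetric] bilinear_def
  by (auto intro!: linearI simp: bracket_add_l bracket_add_r bracket_scaleR_l bracket_scaleR_r)

lemma bl_nbar_part: "bounded_linear nbar_part"
  unfolding linear_conv_bounded_linear[symmetric]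
  by (auto intro!: linearI simp: nbar_part_add nbar_part_scaleR)

definition dc :: "cmat \<Rightarrow> complex" where "dc V = V$0$0 + V$1$1"

lemma bl_dc: "bounded_linear dc"
  unfolding linear_conv_bounded_linear[symmetric] dc_def
  by (auto intro!: linearI simp: scaleR_add_right)

lemma dc_add: "dc (A + B) = dc A + dc B" by (simp add: dc_def)
lemma dc_cscale: "dc (cscale c A) = c * dc A" by (simp add: dc_def distrib_left)

lemma E_scaleR: "E (t *\<^sub>R Y) = mat 1 + t *\<^sub>R Y + (t * t / 2) *\<^sub>R (Y ** Y)"
  by (simp add: E_def mm_scaleR_l mm_scaleR_r)

lemma E_line_vd: "((\<lambda>t. E (t *\<^sub>R Y)) has_vector_derivative Y) (at 0)"
proof -
  have h1: "((\<lambda>x. x *\<^sub>R Y) has_vector_derivative Y) (at 0)"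
    using has_vector_derivative_scaleR[OF DERIV_ident has_vector_derivative_const, of Y] by simp
  have dq: "((\<lambda>x::real. x * x / 2) has_field_derivative 0) (at 0)"
    by (auto intro!: derivative_eq_intros)
  have h2: "((\<lambda>x. (x * x / 2) *\<^sub>R (Y ** Y)) has_vector_derivative 0) (at 0)"
    using has_vector_derivative_scaleR[OF dq has_vector_derivative_const, of "Y ** Y"] by simp
  have "((\<lambda>t. mat 1 + t *\<^sub>R Y + (t * t / 2) *\<^sub>R (Y ** Y)) has_vector_derivative
          (0 + Y + 0)) (at 0)"
    by (intro has_vector_derivative_add has_vector_derivative_const h1 h2)
  then show ?thesis by (simp add: E_scaleR)
qed

lemma E_line_vd': "((\<lambda>t. E (- (t *\<^sub>R Y))) has_vector_derivative - Y) (at 0)"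
  using E_line_vd[of "- Y"] by simp

lemma Ad_path_vd:
  "((\<lambda>t. E (- (t *\<^sub>R Y)) ** K ** E (t *\<^sub>R Y)) has_vector_derivative (K ** Y - Y ** K)) (at 0)"
proof -
  have d1: "((\<lambda>t. E (- (t *\<^sub>R Y)) ** K) has_vector_derivative (E (- (0 *\<^sub>R Y)) ** 0 + (- Y) ** K)) (at 0)"
    by (rule bounded_bilinear.has_vector_derivative[OF bb_mm E_line_vd' has_vector_derivative_const])
  have d2: "((\<lambda>t. E (- (t *\<^sub>R Y)) ** K ** E (t *\<^sub>R Y)) has_vector_derivative
      (E (- (0 *\<^sub>R Y)) ** K ** Y + (E (- (0 *\<^sub>R Y)) ** 0 + (- Y) ** K) ** E (0 *\<^sub>R Y))) (at 0)"
    by (rule bounded_bilinear.has_vector_derivative[OF bb_mm d1 E_line_vd])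
  then show ?thesis by (simp add: E_0 mm_neg_r)
qed


context
  fixes g0 :: "cmat set"
  assumes H: "heis_real_form g0"
begin

lemma S_lowp: "N \<in> nbar \<inter> g0 \<Longrightarrow> lowp N"
  by (simp add: nbar_iff)

lemma Ssub: "subspace (nbar \<inter> g0)" by (rule S_sub[OF H])

lemma S_add: "A \<in> nbar \<inter> g0 \<Longrightarrow> B \<in> nbar \<inter> g0 \<Longrightarrow> A + B \<in> nbar \<inter> g0"
  using Ssub by (rule subspace_add)
lemma S_diff: "A \<in> nbar \<inter> g0 \<Longrightarrow> B \<in> nbar \<inter> g0 \<Longrightarrow> A - B \<in> nbar \<inter> g0"
  using Ssub by (rule subspace_diff)
lemma S_scaleR: "A \<in> nbar \<inter> g0 \<Longrightarrow> r *\<^sub>R A \<in> nbar \<inter> g0"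
  using Ssub by (rule subspace_scale)
lemma S_neg: "A \<in> nbar \<inter> g0 \<Longrightarrow> - A \<in> nbar \<inter> g0"
  using Ssub by (rule subspace_neg)
lemma S_br: "A \<in> nbar \<inter> g0 \<Longrightarrow> B \<in> nbar \<inter> g0 \<Longrightarrow> bracket A B \<in> nbar \<inter> g0"
  using nbar_bracket g0_br[OF H] by auto
lemma S_zero: "0 \<in> nbar \<inter> g0"
  using Ssub by (rule subspace_0)

lemma BCH_line:
  assumes M: "M \<in> nbar \<inter> g0" and V: "V \<in> nbar \<inter> g0"
  shows "E M ** mexp (t *\<^sub>R V) = E (M + t *\<^sub>R (V + (1/2) *\<^sub>R bracket M V))"
proof -
  have lM: "lowp M" and lV: "lowp (t *\<^sub>R V)" using M V S_lowp lowp_scaleR by auto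
  have "E M ** mexp (t *\<^sub>R V) = E M ** E (t *\<^sub>R V)" using mexp_E[OF lV] by simp
  also have "\<dots> = E (M + t *\<^sub>R V + (1/2) *\<^sub>R bracket M (t *\<^sub>R V))" by (rule BCH[OF lM lV])
  also have "M + t *\<^sub>R V + (1/2) *\<^sub>R bracket M (t *\<^sub>R V) = M + t *\<^sub>R (V + (1/2) *\<^sub>R bracket M V)"
    by (simp add: bracket_scaleR_r scaleR_add_right)
  finally show ?thesis .
qed

lemma Rreal_E:
  assumes M: "M \<in> nbar \<inter> g0" and V: "V \<in> nbar \<inter> g0"
  shows "Rreal V g (E M) = vector_derivative (\<lambda>t. g (E (M + t *\<^sub>R (V + (1/2) *\<^sub>R bracket M V)))) (at 0)"
  unfolding Rreal_def BCH_line[OF M V] ..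

lemma half_in: "M \<in> nbar \<inter> g0 \<Longrightarrow> V \<in> nbar \<inter> g0 \<Longrightarrow> V + (1/2) *\<^sub>R bracket M V \<in> nbar \<inter> g0"
  by (intro S_add S_scaleR S_br)

lemma fE: "N \<in> nbar \<inter> g0 \<Longrightarrow> f (E N) = (f \<circ> mexp) N"
  by (simp add: mexp_E S_lowp)

lemma Rreal_f:
  assumes M: "M \<in> nbar \<inter> g0" and V: "V \<in> nbar \<inter> g0"
  shows "Rreal V f (E M) = dd [V + (1/2) *\<^sub>R bracket M V] (f \<circ> mexp) M"
proof -
  have "(\<lambda>t. f (E (M + t *\<^sub>R (V + (1/2) *\<^sub>R bracket M V)))) =
        (\<lambda>t. (f \<circ> mexp) (M + t *\<^sub>R (V + (1/2) *\<^sub>R bracket M V)))"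
    using fE line_in[OF Ssub M half_in[OF M V]] by auto
  then show ?thesis unfolding Rreal_E[OF M V] dd_single by simp
qed

lemma Rop_split:
  assumes "A \<in> nbar \<inter> g0" "B \<in> nbar \<inter> g0"
  shows "Rop g0 (A + cscale \<i> B) g m = Rreal A g m + \<i> * Rreal B g m"
  using Rop_decomp[OF H] assms by auto

lemma Adinv_E: "N \<in> nbar \<inter> g0 \<Longrightarrow> Adinv (E N) X = Ad N X"
  by (simp add: Adinv_def Ad_def matrix_inv_E S_lowp)

end


context
  fixes g0 :: "cmat set" and f :: "cmat \<Rightarrow> complex" and N0 :: cmat
  assumes H: "heis_real_form g0"
    and sm: "smooth_on_sub (nbar \<inter> g0) (f \<circ> mexp)"
    and N0: "N0 \<in> nbar \<inter> g0"
begin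

lemma dd_line:
  assumes P: "P \<in> nbar \<inter> g0" and Q: "Q \<in> nbar \<inter> g0" and R: "R \<in> nbar \<inter> g0"
  shows "((\<lambda>t. dd [Q + t *\<^sub>R R] (f \<circ> mexp) (N0 + t *\<^sub>R P)) has_vector_derivative
           dd [P] (dd [Q] (f \<circ> mexp)) N0 + dd [R] (f \<circ> mexp) N0) (at 0)"
proof -
  have "((\<lambda>t. dd [Q + t *\<^sub>R R] (f \<circ> mexp) (N0 + t *\<^sub>R P)) has_vector_derivative
           dd [P] (dd [Q + 0 *\<^sub>R R] (f \<circ> mexp)) (N0 + 0 *\<^sub>R P) + dd [R] (f \<circ> mexp) (N0 + 0 *\<^sub>R P)) (at 0)"
    by (rule dir_vary[OF Ssub[OF H] sm, of "\<lambda>t. N0 + t *\<^sub>R P" P "\<lambda>t. Q + t *\<^sub>R R" R])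
       (rule line_in[OF Ssub[OF H]] line_vd N0 P Q R)+
  then show ?thesis by simp
qed

lemma termA_Z:
  assumes Z: "Z \<in> nbar \<inter> g0" and Y1: "Y1 \<in> nbar \<inter> g0" and Y2: "Y2 \<in> nbar \<inter> g0"
  shows "Rreal Z (Rop g0 (Y1 + cscale \<i> Y2) f) (E N0) =
     (dd [Z + (1/2) *\<^sub>R bracket N0 Z] (dd [Y1 + (1/2) *\<^sub>R bracket N0 Y1] (f \<circ> mexp)) N0
        + dd [(1/2) *\<^sub>R bracket (Z + (1/2) *\<^sub>R bracket N0 Z) Y1] (f \<circ> mexp) N0)
   + \<i> * (dd [Z + (1/2) *\<^sub>R bracket N0 Z] (dd [Y2 + (1/2) *\<^sub>R bracket N0 Y2] (f \<circ> mexp)) N0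
        + dd [(1/2) *\<^sub>R bracket (Z + (1/2) *\<^sub>R bracket N0 Z) Y2] (f \<circ> mexp) N0)"
proof -
  define P where "P = Z + (1/2) *\<^sub>R bracket N0 Z"
  have P: "P \<in> nbar \<inter> g0" unfolding P_def by (rule half_in[OF H N0 Z])
  define Q1 where "Q1 = Y1 + (1/2) *\<^sub>R bracket N0 Y1"
  define Q2 where "Q2 = Y2 + (1/2) *\<^sub>R bracket N0 Y2"
  have Q1: "Q1 \<in> nbar \<inter> g0" unfolding Q1_def by (rule half_in[OF H N0 Y1])
  have Q2: "Q2 \<in> nbar \<inter> g0" unfolding Q2_def by (rule half_in[OF H N0 Y2])
  define R1 where "R1 = (1/2) *\<^sub>R bracket P Y1"
  define R2 where "R2 = (1/2) *\<^sub>R bracket P Y2"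
  have R1: "R1 \<in> nbar \<inter> g0" unfolding R1_def by (intro S_scaleR[OF H] S_br[OF H] P Y1)
  have R2: "R2 \<in> nbar \<inter> g0" unfolding R2_def by (intro S_scaleR[OF H] S_br[OF H] P Y2)
  have Mt: "N0 + t *\<^sub>R P \<in> nbar \<inter> g0" for t by (rule line_in[OF Ssub[OF H] N0 P])
  have wj: "Yj + (1/2) *\<^sub>R bracket (N0 + t *\<^sub>R P) Yj = (Yj + (1/2) *\<^sub>R bracket N0 Yj) + t *\<^sub>R ((1/2) *\<^sub>R bracket P Yj)" for Yj t
    by (simp add: bracket_add_l bracket_scaleR_l scaleR_add_right algebra_simps)
  have hE: "Rop g0 (Y1 + cscale \<i> Y2) f (E (N0 + t *\<^sub>R P)) =
      dd [Q1 + t *\<^sub>R R1] (f \<circ> mexp) (N0 + t *\<^sub>R P) + \<i> * dd [Q2 + t *\<^sub>R R2] (f \<circ> mexp) (N0 + t *\<^sub>R P)" for t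
    unfolding Rop_split[OF H Y1 Y2] Rreal_f[OF H Mt Y1] Rreal_f[OF H Mt Y2] wj Q1_def Q2_def R1_def R2_def ..
  have "((\<lambda>t. Rop g0 (Y1 + cscale \<i> Y2) f (E (N0 + t *\<^sub>R P))) has_vector_derivative
      (dd [P] (dd [Q1] (f \<circ> mexp)) N0 + dd [R1] (f \<circ> mexp) N0) +
      \<i> * (dd [P] (dd [Q2] (f \<circ> mexp)) N0 + dd [R2] (f \<circ> mexp) N0)) (at 0)"
    unfolding hE
    by (intro has_vector_derivative_add has_vector_derivative_mult_right dd_line P Q1 Q2 R1 R2)
  then show ?thesis
    unfolding Rreal_E[OF H N0 Z] P_def[symmetric] Q1_def[symmetric] Q2_def[symmetric]
      R1_def[symmetric] R2_def[symmetric]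
    by (simp add: vector_derivative_at)
qed


lemma Ad_shift:
  assumes Y: "Y \<in> nbar \<inter> g0"
  shows "Ad (N0 + t *\<^sub>R (Y + (1/2) *\<^sub>R bracket N0 Y)) V = E (- (t *\<^sub>R Y)) ** Ad N0 V ** E (t *\<^sub>R Y)"
proof -
  have lN: "lowp N0" and lY: "lowp (t *\<^sub>R Y)" using S_lowp[OF H N0] S_lowp[OF H Y] lowp_scaleR by auto
  have e1: "E (N0 + t *\<^sub>R (Y + (1/2) *\<^sub>R bracket N0 Y)) = E N0 ** E (t *\<^sub>R Y)"
    using BCH_line[OF H N0 Y, of t] mexp_E[OF lY] by simp
  have "E (- (t *\<^sub>R Y)) ** E (- N0) = E (- (t *\<^sub>R Y) + - N0 + (1/2) *\<^sub>R bracket (- (t *\<^sub>R Y)) (- N0))"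
    by (rule BCH[OF lowp_neg[OF lY] lowp_neg[OF lN]])
  also have "- (t *\<^sub>R Y) + - N0 + (1/2) *\<^sub>R bracket (- (t *\<^sub>R Y)) (- N0) = - (N0 + t *\<^sub>R (Y + (1/2) *\<^sub>R bracket N0 Y))"
    by (simp add: bracket_neg_l bracket_neg_r bracket_scaleR_l bracket_antisym[of Y N0] scaleR_add_right algebra_simps)
  finally have e2: "E (- (N0 + t *\<^sub>R (Y + (1/2) *\<^sub>R bracket N0 Y))) = E (- (t *\<^sub>R Y)) ** E (- N0)" by simp
  show ?thesis unfolding Ad_def e1 e2 by (simp add: mm_assoc)
qed


lemma S_so8: "V \<in> nbar \<inter> g0 \<Longrightarrow> V \<in> so8"
  by (simp add: nbar_iff)

lemma termB:
  assumes X1: "X1 \<in> so8 \<inter> g0" and X2: "X2 \<in> so8 \<inter> g0" and Y: "Y \<in> nbar \<inter> g0"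
  defines "Q \<equiv> Y + (1/2) *\<^sub>R bracket N0 Y"
    and "Z1 \<equiv> nbar_part (Ad N0 X1)" and "Z2 \<equiv> nbar_part (Ad N0 X2)"
    and "U1 \<equiv> nbar_part (bracket (Ad N0 X1) Y)" and "U2 \<equiv> nbar_part (bracket (Ad N0 X2) Y)"
  shows "Rreal Y (PiOp g0 (-1) (X1 + cscale \<i> X2) f) (E N0) =
     dc (bracket (Ad N0 (X1 + cscale \<i> X2)) Y) * (f \<circ> mexp) N0
     + dc (Ad N0 (X1 + cscale \<i> X2)) * dd [Q] (f \<circ> mexp) N0
     - ((dd [Q] (dd [Z1 + (1/2) *\<^sub>R bracket N0 Z1] (f \<circ> mexp)) N0
          + dd [U1 + (1/2) *\<^sub>R (bracket N0 U1 + bracket Q Z1)] (f \<circ> mexp) N0)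
       + \<i> * (dd [Q] (dd [Z2 + (1/2) *\<^sub>R bracket N0 Z2] (f \<circ> mexp)) N0
          + dd [U2 + (1/2) *\<^sub>R (bracket N0 U2 + bracket Q Z2)] (f \<circ> mexp) N0))"
proof -
  let ?F = "f \<circ> mexp"
  let ?X = "X1 + cscale \<i> X2"
  have sub: "subspace (nbar \<inter> g0)" by (rule Ssub[OF H])
  have Q: "Q \<in> nbar \<inter> g0" unfolding Q_def by (rule half_in[OF H N0 Y])
  define Mt where "Mt t = N0 + t *\<^sub>R Q" for t
  have MtS: "Mt t \<in> nbar \<inter> g0" for t unfolding Mt_def by (rule line_in[OF sub N0 Q])
  have Mt0: "Mt 0 = N0" by (simp add: Mt_def)
  have MtL: "lowp (Mt t)" for t using S_lowp[OF H MtS] .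
  have Mt8: "Mt t \<in> so8" for t using S_so8[OF MtS] .
  have X8: "?X \<in> so8" using X1 X2 by (simp add: so8_add so8_cscale)
  have g1: "X1 \<in> g0" and g2: "X2 \<in> g0" and X18: "X1 \<in> so8" and X28: "X2 \<in> so8" using X1 X2 by auto
  define K where "K V t = E (- (t *\<^sub>R Y)) ** Ad N0 V ** E (t *\<^sub>R Y)" for V t
  have AdMt: "Ad (Mt t) V = K V t" for V t
    unfolding Mt_def K_def Q_def by (rule Ad_shift[OF Y])
  have K0: "K V 0 = Ad N0 V" for V by (simp add: K_def E_0)
  have Klin: "K ?X t = K X1 t + cscale \<i> (K X2 t)" for t
    by (simp add: K_def Ad_add Ad_cscale mm_simps)
  have UkS: "nbar_part (K V t) \<in> nbar \<inter> g0" if "V \<in> so8 \<inter> g0" for V t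
  proof -
    have "Ad (Mt t) V \<in> g0" using g0_Ad[OF H MtS] that by auto
    moreover have "Ad (Mt t) V \<in> so8" using so8_Ad[OF MtL Mt8] that by auto
    ultimately show ?thesis unfolding AdMt using nbar_part_g0[OF H] nbar_part_nbar by auto
  qed
  define w1 where "w1 t = nbar_part (K X1 t) + (1/2) *\<^sub>R bracket (Mt t) (nbar_part (K X1 t))" for t
  define w2 where "w2 t = nbar_part (K X2 t) + (1/2) *\<^sub>R bracket (Mt t) (nbar_part (K X2 t))" for t
  have w1S: "w1 t \<in> nbar \<inter> g0" for t unfolding w1_def by (intro half_in[OF H] MtS UkS X1)
  have w2S: "w2 t \<in> nbar \<inter> g0" for t unfolding w2_def by (intro half_in[OF H] MtS UkS X2)
  have PiE: "PiOp g0 (-1) ?X f (E (Mt t)) = dc (K ?X t) * ?F (Mt t) - (dd [w1 t] ?F (Mt t) + \<i> * dd [w2 t] ?F (Mt t))" for t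
  proof -
    have K8: "K ?X t \<in> so8" using so8_Ad[OF MtL Mt8 X8] AdMt by simp
    have np: "nbar_part (K ?X t) = nbar_part (K X1 t) + cscale \<i> (nbar_part (K X2 t))"
      by (simp add: Klin nbar_part_add nbar_part_cscale)
    have a1: "Adinv (E (Mt t)) ?X = K ?X t" using Adinv_E[OF H MtS] AdMt by simp
    have a2: "dchi (q_part (K ?X t)) = dc (K ?X t)" by (simp add: dchi_q_part dchi_so8[OF K8] dc_def)
    have a3: "Rop g0 (nbar_part (K ?X t)) f (E (Mt t)) = dd [w1 t] ?F (Mt t) + \<i> * dd [w2 t] ?F (Mt t)"
      unfolding np Rop_split[OF H UkS[OF X1] UkS[OF X2]] Rreal_f[OF H MtS UkS[OF X1]] Rreal_f[OF H MtS UkS[OF X2]]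
        w1_def w2_def ..
    have a4: "f (E (Mt t)) = ?F (Mt t)" by (rule fE[OF H MtS])
    show ?thesis unfolding PiOp_def a1 a2 a3 a4 by simp
  qed
  have dK: "((\<lambda>t. K V t) has_vector_derivative bracket (Ad N0 V) Y) (at 0)" for V
    unfolding K_def bracket_def by (rule Ad_path_vd)
  have dMt: "(Mt has_vector_derivative Q) (at 0)" unfolding Mt_def by (rule line_vd)
  have dF: "((\<lambda>t. ?F (Mt t)) has_vector_derivative dd [Q] ?F N0) (at 0)"
    using chain_dd[OF sub sm MtS dMt Q] Mt0 by simp
  have ddc: "((\<lambda>t. dc (K ?X t)) has_vector_derivative dc (bracket (Ad N0 ?X) Y)) (at 0)"
    by (rule bounded_linear.has_vector_derivative[OF bl_dc dK])
  have dprod: "((\<lambda>t. dc (K ?X t) * ?F (Mt t)) has_vector_derivative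
      dc (Ad N0 ?X) * dd [Q] ?F N0 + dc (bracket (Ad N0 ?X) Y) * ?F N0) (at 0)"
    using has_vector_derivative_mult[OF ddc dF] K0 Mt0 by simp
  have dw: "((\<lambda>t. nbar_part (K V t) + (1/2) *\<^sub>R bracket (Mt t) (nbar_part (K V t))) has_vector_derivative
      nbar_part (bracket (Ad N0 V) Y) + (1/2) *\<^sub>R (bracket N0 (nbar_part (bracket (Ad N0 V) Y)) + bracket Q (nbar_part (Ad N0 V)))) (at 0)" for V
  proof -
    have dU: "((\<lambda>t. nbar_part (K V t)) has_vector_derivative nbar_part (bracket (Ad N0 V) Y)) (at 0)"
      by (rule bounded_linear.has_vector_derivative[OF bl_nbar_part dK])
    have dB: "((\<lambda>t. bracket (Mt t) (nbar_part (K V t))) has_vector_derivative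
        bracket (Mt 0) (nbar_part (bracket (Ad N0 V) Y)) + bracket Q (nbar_part (K V 0))) (at 0)"
      by (rule bounded_bilinear.has_vector_derivative[OF bb_br dMt dU])
    have dB2: "((\<lambda>t. (1/2) *\<^sub>R bracket (Mt t) (nbar_part (K V t))) has_vector_derivative
        (1/2) *\<^sub>R (bracket (Mt 0) (nbar_part (bracket (Ad N0 V) Y)) + bracket Q (nbar_part (K V 0)))) (at 0)"
      by (rule bounded_linear.has_vector_derivative[OF bounded_linear_scaleR_right dB])
    show ?thesis using has_vector_derivative_add[OF dU dB2] Mt0 K0 by simp
  qed
  have U1S: "U1 \<in> nbar \<inter> g0" unfolding U1_def
    using nbar_part_g0[OF H] nbar_part_nbar g0_br[OF H] so8_bracket g0_Ad[OF H N0] so8_Ad[OF S_lowp[OF H N0] S_so8[OF N0]]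
      X1 Y S_so8[OF Y] by auto
  have U2S: "U2 \<in> nbar \<inter> g0" unfolding U2_def
    using nbar_part_g0[OF H] nbar_part_nbar g0_br[OF H] so8_bracket g0_Ad[OF H N0] so8_Ad[OF S_lowp[OF H N0] S_so8[OF N0]]
      X2 Y S_so8[OF Y] by auto
  have Z1S: "Z1 \<in> nbar \<inter> g0" unfolding Z1_def using UkS[OF X1, of 0] K0 by simp
  have Z2S: "Z2 \<in> nbar \<inter> g0" unfolding Z2_def using UkS[OF X2, of 0] K0 by simp
  have w1': "U1 + (1/2) *\<^sub>R (bracket N0 U1 + bracket Q Z1) \<in> nbar \<inter> g0"
    by (intro S_add[OF H] S_scaleR[OF H] S_br[OF H] U1S N0 Q Z1S)
  have w2': "U2 + (1/2) *\<^sub>R (bracket N0 U2 + bracket Q Z2) \<in> nbar \<inter> g0"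
    by (intro S_add[OF H] S_scaleR[OF H] S_br[OF H] U2S N0 Q Z2S)
  have w10: "w1 0 = Z1 + (1/2) *\<^sub>R bracket N0 Z1" by (simp add: w1_def Z1_def K0 Mt0)
  have w20: "w2 0 = Z2 + (1/2) *\<^sub>R bracket N0 Z2" by (simp add: w2_def Z2_def K0 Mt0)
  have dd1: "((\<lambda>t. dd [w1 t] ?F (Mt t)) has_vector_derivative
     dd [Q] (dd [Z1 + (1/2) *\<^sub>R bracket N0 Z1] ?F) N0 + dd [U1 + (1/2) *\<^sub>R (bracket N0 U1 + bracket Q Z1)] ?F N0) (at 0)"
  proof -
    have d: "(w1 has_vector_derivative U1 + (1/2) *\<^sub>R (bracket N0 U1 + bracket Q Z1)) (at 0)"
      unfolding w1_def[abs_def] U1_def Z1_def by (rule dw)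
    show ?thesis using dir_vary[OF sub sm MtS dMt Q w1S d w1'] w10 Mt0 by simp
  qed
  have dd2: "((\<lambda>t. dd [w2 t] ?F (Mt t)) has_vector_derivative
     dd [Q] (dd [Z2 + (1/2) *\<^sub>R bracket N0 Z2] ?F) N0 + dd [U2 + (1/2) *\<^sub>R (bracket N0 U2 + bracket Q Z2)] ?F N0) (at 0)"
  proof -
    have d: "(w2 has_vector_derivative U2 + (1/2) *\<^sub>R (bracket N0 U2 + bracket Q Z2)) (at 0)"
      unfolding w2_def[abs_def] U2_def Z2_def by (rule dw)
    show ?thesis using dir_vary[OF sub sm MtS dMt Q w2S d w2'] w20 Mt0 by simp
  qed
  have tot: "((\<lambda>t. PiOp g0 (-1) ?X f (E (Mt t))) has_vector_derivative
     (dc (Ad N0 ?X) * dd [Q] ?F N0 + dc (bracket (Ad N0 ?X) Y) * ?F N0) -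
     ((dd [Q] (dd [Z1 + (1/2) *\<^sub>R bracket N0 Z1] ?F) N0 + dd [U1 + (1/2) *\<^sub>R (bracket N0 U1 + bracket Q Z1)] ?F N0)
      + \<i> * (dd [Q] (dd [Z2 + (1/2) *\<^sub>R bracket N0 Z2] ?F) N0 + dd [U2 + (1/2) *\<^sub>R (bracket N0 U2 + bracket Q Z2)] ?F N0))) (at 0)"
    unfolding PiE
    by (intro has_vector_derivative_diff has_vector_derivative_add has_vector_derivative_mult_right dprod dd1 dd2)
  show ?thesis
    unfolding Rreal_E[OF H N0 Y] Q_def[symmetric] Mt_def[symmetric]
    using vector_derivative_at[OF tot] by (simp add: algebra_simps)
qed

end


lemma Yentry: "comp (-1) Y = Y \<Longrightarrow> Y$l$j \<noteq> 0 \<Longrightarrow> hv l - hv j = -1"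
proof -
  assume "comp (-1) Y = Y" "Y$l$j \<noteq> 0"
  then have "comp (-1) Y $ l $ j \<noteq> 0" by simp
  then show ?thesis by (simp add: comp_m1 split: if_splits)
qed

lemma comp_m2_KY: assumes Y: "comp (-1) Y = Y"
  shows "comp (-2) (K ** Y) = nbar_part K ** Y"
proof -
  have t: "nbar_part K $ i $ l * Y $ l $ j = (if hv i - hv j = -2 then K$i$l * Y$l$j else 0)" for i j l
  proof (cases "Y$l$j = 0")
    case True then show ?thesis by simp
  next
    case False
    then have e: "hv l - hv j = -1" using Yentry[OF Y] by blast
    show ?thesis using e hv_range[of i] hv_range[of j] hv_range[of l]
      by (auto simp: nbar_part_def comp_nths)
  qed
  { fix i j
    have "(nbar_part K ** Y) $ i $ j = (\<Sum>l\<in>UNIV. if hv i - hv j = -2 then K$i$l * Y$l$j else 0)"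
      by (simp add: matrix_matrix_mult_def t)
    also have "\<dots> = comp (-2) (K ** Y) $ i $ j"
      by (cases "hv i - hv j = -2") (simp_all add: comp_m2 matrix_matrix_mult_def)
    finally have "comp (-2) (K ** Y) $ i $ j = (nbar_part K ** Y) $ i $ j" by simp }
  then show ?thesis by (simp add: vec_eq_iff)
qed

lemma comp_m2_YK: assumes Y: "comp (-1) Y = Y"
  shows "comp (-2) (Y ** K) = Y ** nbar_part K"
proof -
  have t: "Y $ i $ l * nbar_part K $ l $ j = (if hv i - hv j = -2 then Y$i$l * K$l$j else 0)" for i j l
  proof (cases "Y$i$l = 0")
    case True then show ?thesis by simp
  next
    case False
    then have e: "hv i - hv l = -1" using Yentry[OF Y] by blast
    show ?thesis using e hv_range[of i] hv_range[of j] hv_range[of l]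
      by (auto simp: nbar_part_def comp_nths)
  qed
  { fix i j
    have "(Y ** nbar_part K) $ i $ j = (\<Sum>l\<in>UNIV. if hv i - hv j = -2 then Y$i$l * K$l$j else 0)"
      by (simp add: matrix_matrix_mult_def t)
    also have "\<dots> = comp (-2) (Y ** K) $ i $ j"
      by (cases "hv i - hv j = -2") (simp_all add: comp_m2 matrix_matrix_mult_def)
    finally have "comp (-2) (Y ** K) $ i $ j = (Y ** nbar_part K) $ i $ j" by simp }
  then show ?thesis by (simp add: vec_eq_iff)
qed

lemma comp_m1_bracket: assumes Y: "comp (-1) Y = Y"
  shows "comp (-1) (bracket K Y) = nbar_part (bracket K Y) - bracket (nbar_part K) Y"
proof -
  have "comp (-2) (bracket K Y) = bracket (nbar_part K) Y"
    by (simp add: bracket_def comp_diff comp_m2_KY[OF Y] comp_m2_YK[OF Y])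
  then show ?thesis by (simp add: nbar_part_def)
qed

lemma T_identity:
  assumes "lowp N0" "lowp Z" "lowp Y"
  shows "(U - bracket Z Y) + (1/2) *\<^sub>R bracket N0 (U - bracket Z Y) =
    (U + (1/2) *\<^sub>R (bracket N0 U + bracket (Y + (1/2) *\<^sub>R bracket N0 Y) Z))
     - (1/2) *\<^sub>R bracket (Z + (1/2) *\<^sub>R bracket N0 Z) Y"
proof -
  have z1: "bracket N0 (bracket Z Y) = 0" using assms by (simp add: low2_bracket0' low2_bracket)
  have z2: "bracket (bracket N0 Y) Z = 0" using assms by (simp add: low2_bracket0 low2_bracket)
  have z3: "bracket (bracket N0 Z) Y = 0" using assms by (simp add: low2_bracket0 low2_bracket)
  have as: "bracket Y Z = - bracket Z Y" by (rule bracket_antisym)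
  show ?thesis
    apply (simp only: bracket_diff_r bracket_add_l bracket_scaleR_l z1 z2 z3 as)
    apply (simp add: vec_eq_iff scaleR_nth)
    apply (simp add: scaleR_conv_of_real field_simps)
    done
qed

lemma decomp_W:
  "nbar_part (bracket (A1 + cscale \<i> A2) (Y1 + cscale \<i> Y2)) - bracket (nbar_part (A1 + cscale \<i> A2)) (Y1 + cscale \<i> Y2)
   = ((nbar_part (bracket A1 Y1) - bracket (nbar_part A1) Y1) - (nbar_part (bracket A2 Y2) - bracket (nbar_part A2) Y2))
     + cscale \<i> ((nbar_part (bracket A1 Y2) - bracket (nbar_part A1) Y2) + (nbar_part (bracket A2 Y1) - bracket (nbar_part A2) Y1))"
  apply (simp only: bracket_add_l bracket_add_r bracket_cscale_l bracket_cscale_r nbar_part_add nbar_part_cscale)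
  apply (simp add: vec_eq_iff algebra_simps)
  done

lemma dc_bracket_split: "dc (bracket A (Y1 + cscale \<i> Y2)) = dc (bracket A Y1) + \<i> * dc (bracket A Y2)"
  by (simp add: bracket_add_r bracket_cscale_r dc_add dc_cscale)

lemma Vminus_nbar: "Y \<in> Vminus \<Longrightarrow> Y \<in> nbar"
proof -
  assume a: "Y \<in> Vminus"
  then have y8: "Y \<in> so8" and c: "comp (-1) Y = Y" by (auto simp: Vminus_def)
  have "lowp Y" unfolding lowp_def
  proof (intro allI impI)
    fix i j assume "hv j \<le> hv i"
    then show "Y$i$j = 0" using Yentry[OF c, of i j] by (cases "Y$i$j = 0") auto
  qed
  then show ?thesis using y8 by (simp add: nbar_iff)
qed


theorem proposition5p1:
  fixes g0 :: "cmat set" and f :: "cmat \<Rightarrow> complex" and nb X Y :: cmat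
  assumes "heis_real_form g0"
    and "smooth_Nbar0 g0 f"
    and "nb \<in> Nbar0 g0"
    and "X \<in> so8"
    and "Y \<in> Vminus"
  shows "PiOp g0 (-1) X (Rop g0 Y f) nb - Rop g0 Y (PiOp g0 (-1) X f) nb
         = Rop g0 (comp (-1) (bracket (Adinv nb X) Y)) f nb
           - dchi (comp 0 (bracket (Adinv nb X) Y)) * f nb"
proof -
  let ?F = "f \<circ> mexp"
  have H: "heis_real_form g0" by (rule assms(1))
  have sub: "subspace (nbar \<inter> g0)" by (rule Ssub[OF H])
  have sm: "smooth_on_sub (nbar \<inter> g0) ?F" using assms(2) by (simp add: smooth_Nbar0_def)
  obtain N0 where N0: "N0 \<in> nbar \<inter> g0" and nbm: "nb = mexp N0" using assms(3) by (auto simp: Nbar0_def)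
  have lN: "lowp N0" by (rule S_lowp[OF H N0])
  have S8: "\<And>V. V \<in> nbar \<inter> g0 \<Longrightarrow> V \<in> so8" by (simp add: nbar_iff)
  have nbE: "nb = E N0" using nbm mexp_E[OF lN] by simp
  have cxso8: "complexifies g0 so8" and cxn: "complexifies g0 nbar" using H by (simp_all add: heis_real_form_def)
  obtain X1 X2 where X1: "X1 \<in> so8 \<inter> g0" and X2: "X2 \<in> so8 \<inter> g0" and Xe: "X = X1 + cscale \<i> X2"
    using decomp_in[OF H cxso8 assms(4)] by blast
  have Yn: "Y \<in> nbar" by (rule Vminus_nbar[OF assms(5)])
  have cY: "comp (-1) Y = Y" using assms(5) by (simp add: Vminus_def)
  obtain Y1 Y2 where Y1: "Y1 \<in> nbar \<inter> g0" and Y2: "Y2 \<in> nbar \<inter> g0" and Ye: "Y = Y1 + cscale \<i> Y2"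
    using decomp_in[OF H cxn Yn] by blast
  have Y8: "Y \<in> so8" using Yn by (simp add: nbar_iff)
  have lY1: "lowp Y1" and lY2: "lowp Y2" using S_lowp[OF H Y1] S_lowp[OF H Y2] .
  define A1 where "A1 = Ad N0 X1"
  define A2 where "A2 = Ad N0 X2"
  have A1g: "A1 \<in> so8 \<inter> g0" unfolding A1_def
    using g0_Ad[OF H N0] so8_Ad[OF lN S8[OF N0]] X1 by auto
  have A2g: "A2 \<in> so8 \<inter> g0" unfolding A2_def
    using g0_Ad[OF H N0] so8_Ad[OF lN S8[OF N0]] X2 by auto
  have AX: "Ad N0 X = A1 + cscale \<i> A2" unfolding A1_def A2_def Xe by (simp add: Ad_add Ad_cscale)
  have A8: "Ad N0 X \<in> so8" using so8_Ad[OF lN S8[OF N0] assms(4)] .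
  have Adnb: "Adinv nb X = Ad N0 X" unfolding nbE by (rule Adinv_E[OF H N0])
  define Z1 where "Z1 = nbar_part A1"
  define Z2 where "Z2 = nbar_part A2"
  have Z1S: "Z1 \<in> nbar \<inter> g0" unfolding Z1_def using nbar_part_g0[OF H] nbar_part_nbar A1g by auto
  have Z2S: "Z2 \<in> nbar \<inter> g0" unfolding Z2_def using nbar_part_g0[OF H] nbar_part_nbar A2g by auto
  define P1 where "P1 = Z1 + (1/2) *\<^sub>R bracket N0 Z1"
  define P2 where "P2 = Z2 + (1/2) *\<^sub>R bracket N0 Z2"
  define Q1 where "Q1 = Y1 + (1/2) *\<^sub>R bracket N0 Y1"
  define Q2 where "Q2 = Y2 + (1/2) *\<^sub>R bracket N0 Y2"
  have P1S: "P1 \<in> nbar \<inter> g0" unfolding P1_def by (rule half_in[OF H N0 Z1S])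
  have P2S: "P2 \<in> nbar \<inter> g0" unfolding P2_def by (rule half_in[OF H N0 Z2S])
  have Q1S: "Q1 \<in> nbar \<inter> g0" unfolding Q1_def by (rule half_in[OF H N0 Y1])
  have Q2S: "Q2 \<in> nbar \<inter> g0" unfolding Q2_def by (rule half_in[OF H N0 Y2])
  have US: "nbar_part (bracket A V) \<in> nbar \<inter> g0" if "A \<in> so8 \<inter> g0" "V \<in> nbar \<inter> g0" for A V
    using nbar_part_g0[OF H] nbar_part_nbar g0_br[OF H] so8_bracket S8[OF that(2)] that by auto

  define U11 where "U11 = nbar_part (bracket A1 Y1)"
  define U12 where "U12 = nbar_part (bracket A1 Y2)"
  define U21 where "U21 = nbar_part (bracket A2 Y1)"
  define U22 where "U22 = nbar_part (bracket A2 Y2)"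
  have U11S: "U11 \<in> nbar \<inter> g0" unfolding U11_def by (rule US[OF A1g Y1])
  have U12S: "U12 \<in> nbar \<inter> g0" unfolding U12_def by (rule US[OF A1g Y2])
  have U21S: "U21 \<in> nbar \<inter> g0" unfolding U21_def by (rule US[OF A2g Y1])
  have U22S: "U22 \<in> nbar \<inter> g0" unfolding U22_def by (rule US[OF A2g Y2])
  define S11 where "S11 = U11 + (1/2) *\<^sub>R (bracket N0 U11 + bracket Q1 Z1)"
  define S21 where "S21 = U21 + (1/2) *\<^sub>R (bracket N0 U21 + bracket Q1 Z2)"
  define S12 where "S12 = U12 + (1/2) *\<^sub>R (bracket N0 U12 + bracket Q2 Z1)"
  define S22 where "S22 = U22 + (1/2) *\<^sub>R (bracket N0 U22 + bracket Q2 Z2)"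
  have S11S: "S11 \<in> nbar \<inter> g0" unfolding S11_def by (intro S_add[OF H] S_scaleR[OF H] S_br[OF H] U11S N0 Q1S Z1S)
  have S21S: "S21 \<in> nbar \<inter> g0" unfolding S21_def by (intro S_add[OF H] S_scaleR[OF H] S_br[OF H] U21S N0 Q1S Z2S)
  have S12S: "S12 \<in> nbar \<inter> g0" unfolding S12_def by (intro S_add[OF H] S_scaleR[OF H] S_br[OF H] U12S N0 Q2S Z1S)
  have S22S: "S22 \<in> nbar \<inter> g0" unfolding S22_def by (intro S_add[OF H] S_scaleR[OF H] S_br[OF H] U22S N0 Q2S Z2S)
  define R11 where "R11 = (1/2) *\<^sub>R bracket P1 Y1"
  define R12 where "R12 = (1/2) *\<^sub>R bracket P1 Y2"
  define R21 where "R21 = (1/2) *\<^sub>R bracket P2 Y1"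
  define R22 where "R22 = (1/2) *\<^sub>R bracket P2 Y2"
  have R11S: "R11 \<in> nbar \<inter> g0" unfolding R11_def by (intro S_scaleR[OF H] S_br[OF H] P1S Y1)
  have R12S: "R12 \<in> nbar \<inter> g0" unfolding R12_def by (intro S_scaleR[OF H] S_br[OF H] P1S Y2)
  have R21S: "R21 \<in> nbar \<inter> g0" unfolding R21_def by (intro S_scaleR[OF H] S_br[OF H] P2S Y1)
  have R22S: "R22 \<in> nbar \<inter> g0" unfolding R22_def by (intro S_scaleR[OF H] S_br[OF H] P2S Y2)
  define T11 where "T11 = U11 - bracket Z1 Y1"
  define T12 where "T12 = U12 - bracket Z1 Y2"
  define T21 where "T21 = U21 - bracket Z2 Y1"
  define T22 where "T22 = U22 - bracket Z2 Y2"
  have T11S: "T11 \<in> nbar \<inter> g0" unfolding T11_def by (intro S_diff[OF H] S_br[OF H] U11S Z1S Y1)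
  have T12S: "T12 \<in> nbar \<inter> g0" unfolding T12_def by (intro S_diff[OF H] S_br[OF H] U12S Z1S Y2)
  have T21S: "T21 \<in> nbar \<inter> g0" unfolding T21_def by (intro S_diff[OF H] S_br[OF H] U21S Z2S Y1)
  have T22S: "T22 \<in> nbar \<inter> g0" unfolding T22_def by (intro S_diff[OF H] S_br[OF H] U22S Z2S Y2)
  have hT: "T + (1/2) *\<^sub>R bracket N0 T \<in> nbar \<inter> g0" if "T \<in> nbar \<inter> g0" for T
    by (rule half_in[OF H N0 that])
  define V1 where "V1 = T11 - T22"
  define V2 where "V2 = T12 + T21"
  have V1S: "V1 \<in> nbar \<inter> g0" unfolding V1_def by (intro S_diff[OF H] T11S T22S)
  have V2S: "V2 \<in> nbar \<inter> g0" unfolding V2_def by (intro S_add[OF H] T12S T21S)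
  have hval: "Rop g0 Y f nb = dd [Q1] ?F N0 + \<i> * dd [Q2] ?F N0"
    unfolding Ye nbE Rop_split[OF H Y1 Y2] Rreal_f[OF H N0 Y1] Rreal_f[OF H N0 Y2] Q1_def Q2_def ..
  have npX: "nbar_part (Adinv nb X) = Z1 + cscale \<i> Z2"
    by (simp add: Adnb AX nbar_part_add nbar_part_cscale Z1_def Z2_def)
  have dq: "dchi (q_part (Adinv nb X)) = dc (Ad N0 X)"
    by (simp add: Adnb dchi_q_part dchi_so8[OF A8] dc_def)
  have tA: "PiOp g0 (-1) X (Rop g0 Y f) nb = dc (Ad N0 X) * Rop g0 Y f nb
      - (Rreal Z1 (Rop g0 Y f) nb + \<i> * Rreal Z2 (Rop g0 Y f) nb)"
    unfolding PiOp_def npX dq Rop_split[OF H Z1S Z2S] by simp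
  have RZ1: "Rreal Z1 (Rop g0 Y f) nb = (dd [P1] (dd [Q1] ?F) N0 + dd [R11] ?F N0)
      + \<i> * (dd [P1] (dd [Q2] ?F) N0 + dd [R12] ?F N0)"
    unfolding Ye nbE P1_def Q1_def Q2_def R11_def R12_def P1_def by (rule termA_Z[OF H sm N0 Z1S Y1 Y2])
  have RZ2: "Rreal Z2 (Rop g0 Y f) nb = (dd [P2] (dd [Q1] ?F) N0 + dd [R21] ?F N0)
      + \<i> * (dd [P2] (dd [Q2] ?F) N0 + dd [R22] ?F N0)"
    unfolding Ye nbE P2_def Q1_def Q2_def R21_def R22_def P2_def by (rule termA_Z[OF H sm N0 Z2S Y1 Y2])
  have tB: "Rop g0 Y (PiOp g0 (-1) X f) nb = Rreal Y1 (PiOp g0 (-1) X f) (E N0) + \<i> * Rreal Y2 (PiOp g0 (-1) X f) (E N0)"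
    unfolding Ye nbE by (rule Rop_split[OF H Y1 Y2])
  have RY1: "Rreal Y1 (PiOp g0 (-1) X f) (E N0) = dc (bracket (Ad N0 X) Y1) * ?F N0 + dc (Ad N0 X) * dd [Q1] ?F N0
      - ((dd [Q1] (dd [P1] ?F) N0 + dd [S11] ?F N0) + \<i> * (dd [Q1] (dd [P2] ?F) N0 + dd [S21] ?F N0))"
    unfolding Xe S11_def S21_def U11_def U21_def Q1_def P1_def P2_def Z1_def Z2_def A1_def A2_def
    by (rule termB[OF H sm N0 X1 X2 Y1])
  have RY2: "Rreal Y2 (PiOp g0 (-1) X f) (E N0) = dc (bracket (Ad N0 X) Y2) * ?F N0 + dc (Ad N0 X) * dd [Q2] ?F N0
      - ((dd [Q2] (dd [P1] ?F) N0 + dd [S12] ?F N0) + \<i> * (dd [Q2] (dd [P2] ?F) N0 + dd [S22] ?F N0))"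
    unfolding Xe S12_def S22_def U12_def U22_def Q2_def P1_def P2_def Z1_def Z2_def A1_def A2_def
    by (rule termB[OF H sm N0 X1 X2 Y2])
  have cW: "comp (-1) (bracket (Adinv nb X) Y) = V1 + cscale \<i> V2"
  proof -
    have "comp (-1) (bracket (Adinv nb X) Y) = nbar_part (bracket (Adinv nb X) Y) - bracket (nbar_part (Adinv nb X)) Y"
      by (rule comp_m1_bracket[OF cY])
    also have "\<dots> = V1 + cscale \<i> V2"
      unfolding Adnb AX Ye decomp_W V1_def V2_def T11_def T12_def T21_def T22_def
        U11_def U12_def U21_def U22_def Z1_def Z2_def ..
    finally show ?thesis .
  qed
  have RR: "Rop g0 (V1 + cscale \<i> V2) f nb = dd [V1 + (1/2) *\<^sub>R bracket N0 V1] ?F N0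
      + \<i> * dd [V2 + (1/2) *\<^sub>R bracket N0 V2] ?F N0"
    unfolding nbE Rop_split[OF H V1S V2S] Rreal_f[OF H N0 V1S] Rreal_f[OF H N0 V2S] ..
  have dW: "dchi (comp 0 (bracket (Adinv nb X) Y)) = dc (bracket (Ad N0 X) Y1) + \<i> * dc (bracket (Ad N0 X) Y2)"
  proof -
    have "bracket (Ad N0 X) Y \<in> so8" by (rule so8_bracket[OF A8 Y8])
    then have "dchi (bracket (Ad N0 X) Y) = dc (bracket (Ad N0 X) Y)" by (simp add: dchi_so8 dc_def)
    then show ?thesis by (simp add: dchi_comp0 Adnb Ye dc_bracket_split)
  qed
  have fnb: "f nb = ?F N0" by (simp add: nbm)

  have dV1: "dd [V1 + (1/2) *\<^sub>R bracket N0 V1] ?F N0 =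
      dd [T11 + (1/2) *\<^sub>R bracket N0 T11] ?F N0 - dd [T22 + (1/2) *\<^sub>R bracket N0 T22] ?F N0"
  proof -
    have "V1 + (1/2) *\<^sub>R bracket N0 V1 = (T11 + (1/2) *\<^sub>R bracket N0 T11) - (T22 + (1/2) *\<^sub>R bracket N0 T22)"
      unfolding V1_def by (simp add: bracket_diff_r scaleR_diff_right)
    then show ?thesis using dd_diff[OF sub sm N0 hT[OF T11S] hT[OF T22S]] by simp
  qed
  have dV2: "dd [V2 + (1/2) *\<^sub>R bracket N0 V2] ?F N0 =
      dd [T12 + (1/2) *\<^sub>R bracket N0 T12] ?F N0 + dd [T21 + (1/2) *\<^sub>R bracket N0 T21] ?F N0"
  proof -
    have "V2 + (1/2) *\<^sub>R bracket N0 V2 = (T12 + (1/2) *\<^sub>R bracket N0 T12) + (T21 + (1/2) *\<^sub>R bracket N0 T21)"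
      unfolding V2_def by (simp add: bracket_add_r scaleR_add_right)
    then show ?thesis using dd_add[OF sub sm N0 hT[OF T12S] hT[OF T21S]] by simp
  qed
  have lZ1: "lowp Z1" and lZ2: "lowp Z2" using S_lowp[OF H Z1S] S_lowp[OF H Z2S] .
  have dT11: "dd [T11 + (1/2) *\<^sub>R bracket N0 T11] ?F N0 = dd [S11] ?F N0 - dd [R11] ?F N0"
  proof -
    have e: "T11 + (1/2) *\<^sub>R bracket N0 T11 = S11 - R11"
      unfolding T11_def S11_def R11_def Q1_def P1_def by (rule T_identity[OF lN lZ1 lY1])
    show ?thesis unfolding e by (rule dd_diff[OF sub sm N0 S11S R11S])
  qed
  have dT12: "dd [T12 + (1/2) *\<^sub>R bracket N0 T12] ?F N0 = dd [S12] ?F N0 - dd [R12] ?F N0"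
  proof -
    have e: "T12 + (1/2) *\<^sub>R bracket N0 T12 = S12 - R12"
      unfolding T12_def S12_def R12_def Q2_def P1_def by (rule T_identity[OF lN lZ1 lY2])
    show ?thesis unfolding e by (rule dd_diff[OF sub sm N0 S12S R12S])
  qed
  have dT21: "dd [T21 + (1/2) *\<^sub>R bracket N0 T21] ?F N0 = dd [S21] ?F N0 - dd [R21] ?F N0"
  proof -
    have e: "T21 + (1/2) *\<^sub>R bracket N0 T21 = S21 - R21"
      unfolding T21_def S21_def R21_def Q1_def P2_def by (rule T_identity[OF lN lZ2 lY1])
    show ?thesis unfolding e by (rule dd_diff[OF sub sm N0 S21S R21S])
  qed
  have dT22: "dd [T22 + (1/2) *\<^sub>R bracket N0 T22] ?F N0 = dd [S22] ?F N0 - dd [R22] ?F N0"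
  proof -
    have e: "T22 + (1/2) *\<^sub>R bracket N0 T22 = S22 - R22"
      unfolding T22_def S22_def R22_def Q2_def P2_def by (rule T_identity[OF lN lZ2 lY2])
    show ?thesis unfolding e by (rule dd_diff[OF sub sm N0 S22S R22S])
  qed
  have c11: "dd [P1] (dd [Q1] ?F) N0 = dd [Q1] (dd [P1] ?F) N0" by (rule clairaut[OF sub sm N0 P1S Q1S])
  have c12: "dd [P1] (dd [Q2] ?F) N0 = dd [Q2] (dd [P1] ?F) N0" by (rule clairaut[OF sub sm N0 P1S Q2S])
  have c21: "dd [P2] (dd [Q1] ?F) N0 = dd [Q1] (dd [P2] ?F) N0" by (rule clairaut[OF sub sm N0 P2S Q1S])
  have c22: "dd [P2] (dd [Q2] ?F) N0 = dd [Q2] (dd [P2] ?F) N0" by (rule clairaut[OF sub sm N0 P2S Q2S])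
  have ii: "\<And>z. \<i> * (\<i> * z) = - (z::complex)" by (simp add: mult.assoc[symmetric])
  show ?thesis
    unfolding tA hval RZ1 RZ2 tB RY1 RY2 cW RR dW fnb dV1 dV2 dT11 dT12 dT21 dT22 c11 c12 c21 c22
    by (simp add: algebra_simps ii)
qed


end
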